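(* Fix $E_B<0$. There are constants $C>0$ and $\mu_0>0$ such that for all $L>0$, $\mu>0$ with $\tilde L\ge1$ and $\tilde\mu\ge\mu_0$, $$\Bigl|e_P(\mu)+\frac{\mu}{\log\tilde\mu}\Bigr|\le C\,\frac{\mu\,\log\log\tilde\mu}{(\log\tilde\mu)^2}.$$
   Context: Let $L>0$, $\Lambda_L:=\frac{2\pi}{L}\mathbb Z^2$; all sums over momenta run over $\Lambda_L$ unless further restricted. Fix $E_B<0$ and $\mu>0$, and set $\tilde\mu:=\mu/|E_B|$, $\tilde L:=L\sqrt{|E_B|}$. For $\tau>-\mu$ let $G_\mu(\tau):=L^{-2}\sum_k\Bigl(\frac{1}{k^2-E_B}-\frac{\chi_{(\mu,\infty)}(k^2)}{k^2+\tau}\Bigr)$, a monotonically increasing function of $\tau$. The polaron energy $e_P(\mu)$ is the lowest solution $e$ of $-e=L^{-2}\sum_{k^2\le\mu}G_\mu(-k^2-e)^{-1}$; it exists and $e_P(\mu)<0$. *)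

theory Defs
  imports "HOL-Analysis.Analysis"
begin

text \<open>Momenta in \<Lambda>_L = (2 pi / L) Z^2 are indexed by p = (m,n) :: int \<times> int,
  k = (2 pi / L) (m,n); ksq L p is k^2.\<close>
definition ksq :: "real \<Rightarrow> int \<times> int \<Rightarrow> real" where
  "ksq L p = (2 * pi / L)^2 * (real_of_int (fst p)^2 + real_of_int (snd p)^2)"

definition Gmu :: "real \<Rightarrow> real \<Rightarrow> real \<Rightarrow> real \<Rightarrow> real" where
  "Gmu EB L \<mu> \<tau> = (1 / L^2) *
     (\<Sum>\<^sub>\<infinity>p\<in>(UNIV :: (int \<times> int) set).
        1 / (ksq L p - EB) - (if ksq L p > \<mu> then 1 / (ksq L p + \<tau>) else 0))"

definition polaron_eq :: "real \<Rightarrow> real \<Rightarrow> real \<Rightarrow> real \<Rightarrow> bool" where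
  "polaron_eq EB L \<mu> e \<longleftrightarrow>
     (\<forall>p. ksq L p \<le> \<mu> \<longrightarrow> - ksq L p - e > - \<mu> \<and> Gmu EB L \<mu> (- ksq L p - e) \<noteq> 0) \<and>
     - e = (1 / L^2) * (\<Sum>p\<in>{p. ksq L p \<le> \<mu>}. inverse (Gmu EB L \<mu> (- ksq L p - e)))"

definition eP :: "real \<Rightarrow> real \<Rightarrow> real \<Rightarrow> real" where
  "eP EB L \<mu> = (LEAST e. polaron_eq EB L \<mu> e)"

end

theory Submission
  imports Defs
begin
definition qf :: "int \<times> int \<Rightarrow> int" where "qf p = fst p ^ 2 + snd p ^ 2"
definition cnt :: "real \<Rightarrow> nat" where "cnt x = card {p. real_of_int (qf p) \<le> x}"

lemma qf_nonneg: "qf p \<ge> 0" by (simp add: qf_def)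

lemma int_le_sq: "\<bar>m::int\<bar> \<le> m^2"
proof (cases "m = 0")
  case False
  then have "1 \<le> \<bar>m\<bar>" by linarith
  then have "\<bar>m\<bar> * 1 \<le> \<bar>m\<bar> * \<bar>m\<bar>" by (intro mult_left_mono) auto
  then show ?thesis by (simp add: power2_eq_square abs_mult[symmetric])
qed simp

lemma fin_ball: "finite {p. real_of_int (qf p) \<le> x}"
proof -
  let ?M = "\<lceil>x\<rceil>"
  have "{p. real_of_int (qf p) \<le> x} \<subseteq> {-?M..?M} \<times> {-?M..?M}"
  proof
    fix p assume "p \<in> {p. real_of_int (qf p) \<le> x}"
    then have h: "real_of_int (qf p) \<le> x" by simp
    obtain m n where p: "p = (m,n)" by (cases p)
    have q: "qf p \<le> ?M" using h by (simp add: le_ceiling_iff)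
    have "\<bar>m\<bar> \<le> qf p" "\<bar>n\<bar> \<le> qf p" using int_le_sq[of m] int_le_sq[of n]
      by (auto simp: qf_def p)
    then have "\<bar>m\<bar> \<le> ?M" "\<bar>n\<bar> \<le> ?M" using q by auto
    thus "p \<in> {-?M..?M} \<times> {-?M..?M}" by (auto simp: p)
  qed
  thus ?thesis by (rule finite_subset) auto
qed

lemma row_set:
  assumes "y \<ge> 0"
  shows "{n::int. real_of_int (n^2) \<le> y} = {-\<lfloor>sqrt y\<rfloor>..\<lfloor>sqrt y\<rfloor>}"
proof -
  define k where "k = \<lfloor>sqrt y\<rfloor>"
  have *: "real_of_int (n^2) \<le> y \<longleftrightarrow> -k \<le> n \<and> n \<le> k" for n
  proof -
    have "real_of_int (n^2) \<le> y \<longleftrightarrow> \<bar>real_of_int n\<bar> \<le> sqrt y"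
    proof
      assume "real_of_int (n^2) \<le> y"
      then have "\<bar>real_of_int n\<bar>^2 \<le> y" by simp
      then show "\<bar>real_of_int n\<bar> \<le> sqrt y" by (rule real_le_rsqrt)
    next
      assume "\<bar>real_of_int n\<bar> \<le> sqrt y"
      then have "(real_of_int n)^2 \<le> y" by (rule sqrt_ge_absD)
      then show "real_of_int (n^2) \<le> y" by simp
    qed
    also have "\<dots> \<longleftrightarrow> \<bar>n\<bar> \<le> k" unfolding k_def
      by (metis le_floor_iff of_int_abs)
    also have "\<dots> \<longleftrightarrow> -k \<le> n \<and> n \<le> k" by (auto simp: abs_le_iff)
    finally show ?thesis .
  qed
  show ?thesis unfolding k_def[symmetric] by (rule set_eqI) (simp only: mem_Collect_eq atLeastAtMost_iff *)
qed

lemma card_row: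
  assumes "y \<ge> 0"
  shows "card {n::int. real_of_int (n^2) \<le> y} = nat (2 * \<lfloor>sqrt y\<rfloor> + 1)"
proof -
  have "card {-\<lfloor>sqrt y\<rfloor>..\<lfloor>sqrt y\<rfloor>} = nat (\<lfloor>sqrt y\<rfloor> - (-\<lfloor>sqrt y\<rfloor>) + 1)"
    by (rule card_atLeastAtMost_int)
  then show ?thesis unfolding row_set[OF assms] by (simp add: algebra_simps)
qed

lemma row_fin: "finite {n::int. (real_of_int n)^2 \<le> y}"
proof -
  have "{n::int. (real_of_int n)^2 \<le> y} \<subseteq> {n::int. real_of_int (n^2) \<le> max y 0}" by auto
  moreover have "finite {n::int. real_of_int (n^2) \<le> max y 0}" by (subst row_set) auto
  ultimately show ?thesis by (rule finite_subset)
qed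

lemma cnt_rows:
  assumes "x \<ge> 0"
  shows "real (cnt x) = (\<Sum>m\<in>{-\<lfloor>sqrt x\<rfloor>..\<lfloor>sqrt x\<rfloor>}. 2 * of_int \<lfloor>sqrt (x - of_int m ^ 2)\<rfloor> + 1)"
proof -
  let ?M = "\<lfloor>sqrt x\<rfloor>"
  have eq: "{p. real_of_int (qf p) \<le> x} = Sigma {-?M..?M} (\<lambda>m. {n. real_of_int (n^2) \<le> x - of_int m ^ 2})"
  proof (safe)
    fix m n assume h: "real_of_int (qf (m,n)) \<le> x"
    have "real_of_int (m^2) \<le> x" using h zero_le_power2[of "real_of_int n"] unfolding qf_def of_int_add of_int_power fst_conv snd_conv by linarith
    then show "m \<in> {-?M..?M}" using row_set[OF assms] by blast
    show "real_of_int (n^2) \<le> x - of_int m ^ 2" using h by (simp add: qf_def)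
  next
    fix m n assume "real_of_int (n^2) \<le> x - of_int m ^ 2"
    then show "real_of_int (qf (m,n)) \<le> x" by (simp add: qf_def)
  qed
  have rows: "m \<in> {-?M..?M} \<Longrightarrow> x - of_int m ^ 2 \<ge> 0" for m
    using row_set[OF assms] by (auto simp: set_eq_iff)
  have "cnt x = (\<Sum>m\<in>{-?M..?M}. card {n. real_of_int (n^2) \<le> x - of_int m ^ 2})"
    unfolding cnt_def eq
    by (subst card_SigmaI) (auto simp: row_fin)
  also have "\<dots> = (\<Sum>m\<in>{-?M..?M}. nat (2 * \<lfloor>sqrt (x - of_int m ^ 2)\<rfloor> + 1))"
    by (intro sum.cong refl card_row rows)
  finally have "real (cnt x) = (\<Sum>m\<in>{-?M..?M}. real (nat (2 * \<lfloor>sqrt (x - of_int m ^ 2)\<rfloor> + 1)))"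
    by simp
  also have "\<dots> = (\<Sum>m\<in>{-?M..?M}. 2 * of_int \<lfloor>sqrt (x - of_int m ^ 2)\<rfloor> + 1)"
  proof (intro sum.cong refl)
    fix m assume "m \<in> {-?M..?M}"
    then have "0 \<le> sqrt (x - of_int m ^ 2)" using rows by simp
    then have "0 \<le> 2 * \<lfloor>sqrt (x - of_int m ^ 2)\<rfloor> + 1" by simp
    then show "real (nat (2 * \<lfloor>sqrt (x - of_int m ^ 2)\<rfloor> + 1)) = 2 * of_int \<lfloor>sqrt (x - of_int m ^ 2)\<rfloor> + 1"
      by (metis of_int_1 of_int_add of_int_mult of_int_numeral of_nat_nat)
  qed
  finally show ?thesis .
qed

definition Phi :: "real \<Rightarrow> real \<Rightarrow> real" where
  "Phi x t = (t * sqrt (x - t^2) + x * arcsin (t / sqrt x)) / 2"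

lemma Phi_deriv:
  assumes x: "0 < x" and t1: "- sqrt x < t" and t2: "t < sqrt x"
  shows "(Phi x has_real_derivative sqrt (x - t^2)) (at t)"
proof -
  have sx: "sqrt x > 0" using x by simp
  have "\<bar>t\<bar> < sqrt x" using t1 t2 by linarith
  then have "t^2 < (sqrt x)^2" by (metis abs_ge_zero power2_abs power_strict_mono zero_less_numeral)
  then have xt: "x - t^2 > 0" using x by simp
  define w where "w = sqrt (x - t^2)"
  have w: "w > 0" using xt by (simp add: w_def)
  have w2: "w^2 = x - t^2" using xt by (simp add: w_def)
  have q1: "-1 < t / sqrt x" "t / sqrt x < 1" using t1 t2 sx by (auto simp: field_simps)
  have i1: "((\<lambda>t. x - t^2) has_real_derivative -(2*t)) (at t)"
    by (auto intro!: derivative_eq_intros)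
  have d1: "((\<lambda>t. sqrt (x - t^2)) has_real_derivative (inverse w / 2) * (- (2 * t))) (at t)"
    unfolding w_def by (rule DERIV_chain2[OF DERIV_real_sqrt[OF xt] i1])
  have i2: "((\<lambda>t. t / sqrt x) has_real_derivative 1 / sqrt x) (at t)"
    by (rule DERIV_cdivide[OF DERIV_ident])
  have d2: "((\<lambda>t. arcsin (t / sqrt x)) has_real_derivative inverse (sqrt (1 - (t / sqrt x)^2)) * (1 / sqrt x)) (at t)"
    by (rule DERIV_chain2[OF DERIV_arcsin[OF q1] i2])
  have d: "(Phi x has_real_derivative ((1 * sqrt (x - t^2) + (inverse w / 2 * - (2 * t)) * t) + x * (inverse (sqrt (1 - (t / sqrt x)^2)) * (1 / sqrt x))) / 2) (at t)"
    unfolding Phi_def[abs_def] by (rule DERIV_cdivide[OF DERIV_add[OF DERIV_mult[OF DERIV_ident d1] DERIV_cmult[OF d2]]])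
  have e1: "1 - (t / sqrt x)^2 = (x - t^2) / x" using x by (simp add: power_divide field_simps)
  have e2: "sqrt (1 - (t / sqrt x)^2) = w / sqrt x" unfolding e1 w_def by (simp add: real_sqrt_divide)
  have "((1 * sqrt (x - t^2) + (inverse w / 2 * - (2 * t)) * t) + x * (inverse (sqrt (1 - (t / sqrt x)^2)) * (1 / sqrt x))) / 2
        = (w - t^2 / w + x / w) / 2"
    unfolding e2 w_def[symmetric] using w sx by (simp add: field_simps power2_eq_square)
  also have "\<dots> = (w^2 - t^2 + x) / w / 2" using w by (simp add: field_simps power2_eq_square)
  also have "\<dots> = w" using w w2 by (simp add: field_simps power2_eq_square)
  finally have eq: "((1 * sqrt (x - t^2) + (inverse w / 2 * - (2 * t)) * t) + x * (inverse (sqrt (1 - (t / sqrt x)^2)) * (1 / sqrt x))) / 2 = w" .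
  show ?thesis using DERIV_cong[OF d eq] unfolding w_def .
qed

lemma Phi_cont:
  assumes x: "0 < x"
  shows "continuous_on {0..sqrt x} (Phi x)"
proof -
  have sx: "sqrt x > 0" using x by simp
  have "\<forall>t\<in>{0..sqrt x}. -1 \<le> t / sqrt x \<and> t / sqrt x \<le> 1" using sx x by (auto simp: divide_le_eq le_divide_eq)
  then show ?thesis unfolding Phi_def using x by (intro continuous_intros) auto
qed

lemma phi_anti:
  assumes "0 \<le> a" "a \<le> b"
  shows "sqrt (x - b^2) \<le> sqrt (x - a^2)"
  using assms by (simp add: power_mono)

lemma Phi_mvt:
  assumes x: "0 < x" and ab: "0 \<le> a" "a \<le> b" "b \<le> sqrt x"
  shows "sqrt (x - b^2) * (b - a) \<le> Phi x b - Phi x a \<and> Phi x b - Phi x a \<le> sqrt (x - a^2) * (b - a)"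
proof (cases "a = b")
  case False
  then have lt: "a < b" using ab by simp
  have "continuous_on {a..b} (Phi x)"
    by (rule continuous_on_subset[OF Phi_cont[OF x]]) (use ab in auto)
  moreover have "Phi x differentiable (at z)" if "a < z" "z < b" for z
    using Phi_deriv[OF x, of z] that ab real_differentiable_def
    by (smt (verit, ccfv_threshold) real_sqrt_ge_zero x)
  ultimately obtain l z where z: "a < z" "z < b" "DERIV (Phi x) z :> l" "Phi x b - Phi x a = (b - a) * l"
    using MVT[OF lt] by blast
  have "DERIV (Phi x) z :> sqrt (x - z^2)"
    using Phi_deriv[OF x, of z] z ab by (smt (verit, ccfv_threshold) real_sqrt_ge_zero x)
  then have l: "l = sqrt (x - z^2)" using z(3) DERIV_unique by blast
  have "sqrt (x - b^2) \<le> l" "l \<le> sqrt (x - a^2)" unfolding l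
    using phi_anti[of z b x] phi_anti[of a z x] z ab by auto
  then show ?thesis using z(4) lt by (simp add: mult.commute mult_right_mono)
qed simp

lemma sum_phi:
  assumes x: "0 < x"
  shows "real n \<le> sqrt x \<Longrightarrow> (\<Sum>k\<in>{1..n}. sqrt (x - (real k)^2)) \<le> Phi x n - Phi x 0 \<and>
            Phi x n - Phi x 0 \<le> (\<Sum>k<n. sqrt (x - (real k)^2))"
proof (induction n)
  case 0
  then show ?case by simp
next
  case (Suc n)
  then have IH: "(\<Sum>k\<in>{1..n}. sqrt (x - (real k)^2)) \<le> Phi x n - Phi x 0 \<and>
            Phi x n - Phi x 0 \<le> (\<Sum>k<n. sqrt (x - (real k)^2))" by simp
  have m: "sqrt (x - (real n + 1)^2) * ((real n + 1) - real n) \<le> Phi x (real n + 1) - Phi x (real n) \<and>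
           Phi x (real n + 1) - Phi x (real n) \<le> sqrt (x - (real n)^2) * ((real n + 1) - real n)"
    by (rule Phi_mvt[OF x]) (use Suc.prems in auto)
  show ?case using IH m by (simp add: add.commute)
qed

lemma Phi_end:
  assumes x: "0 < x"
  shows "Phi x (sqrt x) = pi * x / 4" "Phi x 0 = 0"
  using x by (auto simp: Phi_def)

lemma sum_sym:
  fixes F :: "int \<Rightarrow> real"
  assumes ev: "\<And>m. F (-m) = F m"
  shows "(\<Sum>m\<in>{-int n..int n}. F m) = 2 * (\<Sum>k\<in>{0..n}. F (int k)) - F 0"
proof (induction n)
  case 0
  then show ?case by simp
next
  case (Suc n)
  have set: "{-int (Suc n)..int (Suc n)} = insert (-int (Suc n)) (insert (int (Suc n)) {-int n..int n})"
    by auto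
  have "(\<Sum>m\<in>{-int (Suc n)..int (Suc n)}. F m) = F (-int (Suc n)) + F (int (Suc n)) + (\<Sum>m\<in>{-int n..int n}. F m)"
    unfolding set by (subst sum.insert) (auto simp: sum.insert)
  also have "\<dots> = 2 * F (int (Suc n)) + (2 * (\<Sum>k\<in>{0..n}. F (int k)) - F 0)"
    using Suc.IH ev[of "int (Suc n)"] by simp
  also have "\<dots> = 2 * (\<Sum>k\<in>{0..Suc n}. F (int k)) - F 0"
    by (simp add: sum.atLeast0_atMost_Suc algebra_simps)
  finally show ?case .
qed

lemma cnt_bound:
  assumes x0: "0 \<le> x"
  shows "\<bar>real (cnt x) - pi * x\<bar> \<le> 4 * sqrt x + 1"
proof (cases "x = 0")
  case True
  then show ?thesis using cnt_rows[of 0] by simp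
next
  case False
  then have x: "0 < x" using x0 by simp
  define n where "n = nat \<lfloor>sqrt x\<rfloor>"
  have Mn: "\<lfloor>sqrt x\<rfloor> = int n" unfolding n_def using x0 by simp
  have nle: "real n \<le> sqrt x" unfolding n_def using x0 by (simp add: of_nat_nat)
  have ngt: "sqrt x < real n + 1"
  proof -
    have "sqrt x < of_int \<lfloor>sqrt x\<rfloor> + 1" by linarith
    then show ?thesis unfolding Mn by simp
  qed
  define phi where "phi t = sqrt (x - t^2)" for t
  have sp: "(\<Sum>k\<in>{1..n}. phi (real k)) \<le> Phi x n - Phi x 0 \<and> Phi x n - Phi x 0 \<le> (\<Sum>k<n. phi (real k))"
    unfolding phi_def using sum_phi[OF x nle] .
  have tail: "0 \<le> Phi x (sqrt x) - Phi x n \<and> Phi x (sqrt x) - Phi x n \<le> phi (real n)"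
  proof -
    have "phi (sqrt x) * (sqrt x - real n) \<le> Phi x (sqrt x) - Phi x n \<and>
          Phi x (sqrt x) - Phi x n \<le> phi (real n) * (sqrt x - real n)"
      unfolding phi_def by (rule Phi_mvt[OF x]) (use nle in auto)
    moreover have "phi (sqrt x) = 0" using x0 by (simp add: phi_def)
    moreover have "phi (real n) * (sqrt x - real n) \<le> phi (real n)"
    proof -
      have "(real n)^2 \<le> (sqrt x)^2" using power_mono[OF nle, of 2] by simp
      then have "0 \<le> phi (real n)" unfolding phi_def using x0 by simp
      then show ?thesis using nle ngt by (simp add: mult_left_le)
    qed
    ultimately show ?thesis by simp
  qed
  define S where "S = (\<Sum>k\<in>{0..n}. phi (real k))"
  have S1: "S = phi 0 + (\<Sum>k\<in>{1..n}. phi (real k))"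
    unfolding S_def by (simp add: sum.atLeast_Suc_atMost)
  have S2: "S = (\<Sum>k<n. phi (real k)) + phi (real n)"
    unfolding S_def by (simp add: atLeast0AtMost lessThan_Suc_atMost[symmetric])
  have phi0: "phi 0 = sqrt x" by (simp add: phi_def)
  have Slo: "pi * x / 4 \<le> S" using sp tail S2 Phi_end[OF x] by linarith
  have Shi: "S \<le> pi * x / 4 + sqrt x" using sp tail S1 phi0 Phi_end[OF x] by linarith
  have sym: "(\<Sum>m\<in>{-int n..int n}. phi (of_int m)) = 2 * S - sqrt x"
    unfolding S_def using sum_sym[of "\<lambda>m. phi (of_int m)" n] phi0 by (simp add: phi_def)
  have rows: "real (cnt x) = (\<Sum>m\<in>{-int n..int n}. 2 * of_int \<lfloor>phi (of_int m)\<rfloor> + 1)"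
    using cnt_rows[OF x0] unfolding Mn phi_def .
  have card: "real (card {-int n..int n}) = 2 * real n + 1" by simp
  have up: "real (cnt x) \<le> (\<Sum>m\<in>{-int n..int n}. 2 * phi (of_int m) + 1)"
    unfolding rows by (intro sum_mono) linarith
  have lo: "(\<Sum>m\<in>{-int n..int n}. 2 * phi (of_int m) - 1) \<le> real (cnt x)"
    unfolding rows by (intro sum_mono) linarith
  have e1: "(\<Sum>m\<in>{-int n..int n}. 2 * phi (of_int m) + 1) = 2 * (2 * S - sqrt x) + (2 * real n + 1)"
    using sym card by (simp add: sum.distrib sum_distrib_left[symmetric])
  have e2: "(\<Sum>m\<in>{-int n..int n}. 2 * phi (of_int m) - 1) = 2 * (2 * S - sqrt x) - (2 * real n + 1)"
    using sym card by (simp add: sum_subtractf sum_distrib_left[symmetric])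
  show ?thesis using up lo e1 e2 Slo Shi nle by (simp add: abs_le_iff)
qed

definition shell :: "nat \<Rightarrow> nat \<Rightarrow> (int \<times> int) set" where
  "shell A B = {p. int A < qf p \<and> qf p \<le> int B}"

definition CN :: "nat \<Rightarrow> real" where "CN n = real (cnt (real n))"

lemma ball_int: "{p. real_of_int (qf p) \<le> real n} = {p. qf p \<le> int n}"
  by (metis (no_types, opaque_lifting) of_int_le_iff of_int_of_nat_eq)

lemma fin_ballI: "finite {p. qf p \<le> int n}"
  using fin_ball[of "real n"] unfolding ball_int .

lemma fin_shell: "finite (shell A B)"
  by (rule finite_subset[OF _ fin_ballI[of B]]) (auto simp: shell_def)

lemma CN_Suc: "CN (Suc n) = CN n + real (card {p. qf p = int (Suc n)})"
proof -
  have "{p. qf p \<le> int (Suc n)} = {p. qf p \<le> int n} \<union> {p. qf p = int (Suc n)}" by auto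
  moreover have "finite {p. qf p = int (Suc n)}"
    by (rule finite_subset[OF _ fin_ballI[of "Suc n"]]) auto
  ultimately have "card {p. qf p \<le> int (Suc n)} = card {p. qf p \<le> int n} + card {p. qf p = int (Suc n)}"
    using fin_ballI[of n] by (simp add: card_Un_disjoint disjoint_iff)
  then show ?thesis unfolding CN_def cnt_def ball_int by simp
qed

lemma abel:
  assumes "A \<le> B"
  shows "(\<Sum>p\<in>shell A B. f (nat (qf p))) = CN B * f B - CN A * f A + (\<Sum>n\<in>{A..<B}. CN n * (f n - f (Suc n)))"
  using assms
proof (induction B rule: dec_induct)
  case base
  have "shell A A = {}" by (auto simp: shell_def)
  then show ?case by simp
next
  case (step n)
  have set: "shell A (Suc n) = shell A n \<union> {p. qf p = int (Suc n)}"
    using step.hyps(1) by (auto simp: shell_def)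
  have fin2: "finite {p. qf p = int (Suc n)}"
    by (rule finite_subset[OF _ fin_ballI[of "Suc n"]]) auto
  have disj: "shell A n \<inter> {p. qf p = int (Suc n)} = {}" by (auto simp: shell_def)
  have s2: "(\<Sum>p\<in>{p. qf p = int (Suc n)}. f (nat (qf p))) = real (card {p. qf p = int (Suc n)}) * f (Suc n)"
  proof -
    have "(\<Sum>p\<in>{p. qf p = int (Suc n)}. f (nat (qf p))) = (\<Sum>p\<in>{p. qf p = int (Suc n)}. f (Suc n))"
    proof (intro sum.cong refl)
      fix p assume "p \<in> {p. qf p = int (Suc n)}"
      then have "qf p = int (Suc n)" by simp
      then show "f (nat (qf p)) = f (Suc n)" by (metis nat_int)
    qed
    then show ?thesis by simp
  qed
  have "(\<Sum>p\<in>shell A (Suc n). f (nat (qf p))) = (\<Sum>p\<in>shell A n. f (nat (qf p))) + real (card {p. qf p = int (Suc n)}) * f (Suc n)"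
    unfolding set by (subst sum.union_disjoint) (use fin_shell fin2 disj s2 in auto)
  also have "\<dots> = CN (Suc n) * f (Suc n) - CN A * f A + (\<Sum>n\<in>{A..<Suc n}. CN n * (f n - f (Suc n)))"
    unfolding step.IH using step.hyps(1) CN_Suc[of n] by (simp add: algebra_simps)
  finally show ?case .
qed

lemma tele:
  assumes "A \<le> B"
  shows "real B * f B - real A * f A + (\<Sum>n\<in>{A..<B}. real n * (f n - f (Suc n))) = (\<Sum>n\<in>{A<..B}. f n)"
  using assms
proof (induction B rule: dec_induct)
  case base
  then show ?case by simp
next
  case (step n)
  have "{A<..Suc n} = insert (Suc n) {A<..n}" using step.hyps(1) by auto
  then have "(\<Sum>n\<in>{A<..Suc n}. f n) = f (Suc n) + (\<Sum>n\<in>{A<..n}. f n)" by simp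
  then show ?case using step.IH step.hyps(1) by (simp add: algebra_simps)
qed

definition EE :: "nat \<Rightarrow> real" where "EE n = 4 * sqrt (real n) + 1"

lemma CN_err: "\<bar>CN n - pi * real n\<bar> \<le> EE n"
  unfolding CN_def EE_def using cnt_bound[of "real n"] by simp

lemma abel_bound:
  assumes AB: "A \<le> B"
    and nonneg: "\<And>n. A \<le> n \<Longrightarrow> n \<le> B \<Longrightarrow> 0 \<le> f n"
    and anti: "\<And>n. A \<le> n \<Longrightarrow> n < B \<Longrightarrow> f (Suc n) \<le> f n"
  shows "\<bar>(\<Sum>p\<in>shell A B. f (nat (qf p))) - pi * (\<Sum>n\<in>{A<..B}. f n)\<bar>
          \<le> EE B * f B + EE A * f A + (\<Sum>n\<in>{A..<B}. EE n * (f n - f (Suc n)))"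
proof -
  define d where "d n = CN n - pi * real n" for n
  have C: "CN n = pi * real n + d n" for n unfolding d_def by simp
  have eq: "(\<Sum>p\<in>shell A B. f (nat (qf p))) - pi * (\<Sum>n\<in>{A<..B}. f n)
      = d B * f B - d A * f A + (\<Sum>n\<in>{A..<B}. d n * (f n - f (Suc n)))"
  proof -
    have "(\<Sum>p\<in>shell A B. f (nat (qf p))) = CN B * f B - CN A * f A + (\<Sum>n\<in>{A..<B}. CN n * (f n - f (Suc n)))"
      by (rule abel[OF AB])
    also have "\<dots> = pi * (real B * f B - real A * f A + (\<Sum>n\<in>{A..<B}. real n * (f n - f (Suc n))))
        + (d B * f B - d A * f A + (\<Sum>n\<in>{A..<B}. d n * (f n - f (Suc n))))"
    proof -
      have "(\<Sum>n\<in>{A..<B}. CN n * (f n - f (Suc n))) = pi * (\<Sum>n\<in>{A..<B}. real n * (f n - f (Suc n))) + (\<Sum>n\<in>{A..<B}. d n * (f n - f (Suc n)))"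
        by (simp add: C distrib_right sum.distrib sum_distrib_left mult.assoc)
      then show ?thesis using C[of A] C[of B] by (simp add: algebra_simps)
    qed
    also have "\<dots> = pi * (\<Sum>n\<in>{A<..B}. f n) + (d B * f B - d A * f A + (\<Sum>n\<in>{A..<B}. d n * (f n - f (Suc n))))"
      using tele[OF AB, of f] by simp
    finally show ?thesis by simp
  qed
  have dE: "\<bar>d n\<bar> \<le> EE n" for n unfolding d_def by (rule CN_err)
  have b1: "\<bar>d B * f B\<bar> \<le> EE B * f B"
    using dE[of B] nonneg[of B] AB by (simp add: abs_mult mult_right_mono)
  have b2: "\<bar>d A * f A\<bar> \<le> EE A * f A"
    using dE[of A] nonneg[of A] AB by (simp add: abs_mult mult_right_mono)
  have b3: "\<bar>\<Sum>n\<in>{A..<B}. d n * (f n - f (Suc n))\<bar> \<le> (\<Sum>n\<in>{A..<B}. EE n * (f n - f (Suc n)))"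
  proof -
    have "\<bar>\<Sum>n\<in>{A..<B}. d n * (f n - f (Suc n))\<bar> \<le> (\<Sum>n\<in>{A..<B}. \<bar>d n * (f n - f (Suc n))\<bar>)"
      by (rule sum_abs)
    also have "\<dots> \<le> (\<Sum>n\<in>{A..<B}. EE n * (f n - f (Suc n)))"
    proof (intro sum_mono)
      fix n assume "n \<in> {A..<B}"
      then have "0 \<le> f n - f (Suc n)" using anti by auto
      then show "\<bar>d n * (f n - f (Suc n))\<bar> \<le> EE n * (f n - f (Suc n))"
        using dE[of n] by (simp add: abs_mult mult_right_mono)
    qed
    finally show ?thesis .
  qed
  show ?thesis unfolding eq using b1 b2 b3 by linarith
qed

lemma key32:
  assumes M: "1 \<le> M"
  shows "1 / ((real M + 1) * sqrt (real M + 1)) \<le> 2 / sqrt (real M) - 2 / sqrt (real M + 1)"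
proof -
  define u where "u = sqrt (real M)"
  define v where "v = sqrt (real M + 1)"
  have u: "u > 0" unfolding u_def using M by simp
  have uv: "u < v" unfolding u_def v_def by simp
  have u2: "u^2 = real M" unfolding u_def by simp
  have v2: "v^2 = real M + 1" unfolding v_def by simp
  have v: "v > 0" using u uv by simp
  have diff: "(v - u) * (v + u) = 1" using u2 v2 by (simp add: algebra_simps power2_eq_square)
  have e1: "2 / u - 2 / v = 2 / (u * v * (u + v))"
  proof -
    have "2 / u - 2 / v = 2 * (v - u) / (u * v)" using u v by (simp add: field_simps)
    also have "\<dots> = 2 / (u * v * (u + v))"
    proof -
      have vu: "v - u = 1 / (u + v)" using diff u v by (simp add: eq_divide_eq add.commute)
      show ?thesis unfolding vu by simp
    qed
    finally show ?thesis .
  qed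
  have vv: "real M + 1 = v * v" using v2 by (simp add: power2_eq_square)
  have e2: "1 / ((real M + 1) * v) = 1 / (v * v * v)" unfolding vv ..
  have ineq: "u * v * (u + v) \<le> 2 * (v * v * v)"
  proof -
    have "u * u \<le> v * v" using u uv by (intro mult_mono) auto
    moreover have "u * v \<le> v * v" using u uv by (intro mult_right_mono) auto
    ultimately have "u * u + u * v \<le> 2 * (v * v)" by simp
    then have "v * (u * u + u * v) \<le> v * (2 * (v * v))" using v by (intro mult_left_mono) auto
    then show ?thesis by (simp add: algebra_simps)
  qed
  have "1 / (v * v * v) \<le> 2 / (u * v * (u + v))"
    using ineq u v by (simp add: divide_simps)
  then have "1 / ((real M + 1) * v) \<le> 2 / u - 2 / v" using e1 e2 by linarith
  then show ?thesis by (simp add: u_def v_def)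
qed

lemma sum32:
  assumes "1 \<le> M"
  shows "(\<Sum>n\<in>{1..M}. 1 / (real n * sqrt (real n))) \<le> 3 - 2 / sqrt (real M)"
  using assms
proof (induction M rule: dec_induct)
  case base
  then show ?case by simp
next
  case (step n)
  have "(\<Sum>n\<in>{1..Suc n}. 1 / (real n * sqrt (real n))) = (\<Sum>n\<in>{1..n}. 1 / (real n * sqrt (real n))) + 1 / ((real n + 1) * sqrt (real n + 1))"
    by (simp add: add.commute)
  also have "\<dots> \<le> 3 - 2 / sqrt (real n) + (2 / sqrt (real n) - 2 / sqrt (real n + 1))"
    using step.IH key32[OF step.hyps(1)] by linarith
  finally show ?case by (simp add: add.commute)
qed

lemma sum32': "(\<Sum>n\<in>{1..M}. 1 / (real n * sqrt (real n))) \<le> 3"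
proof (cases "M = 0")
  case False
  then show ?thesis using sum32[of M] by (smt (verit) divide_nonneg_nonneg less_one not_less real_sqrt_ge_zero of_nat_0_le_iff)
qed simp

lemma harm_up:
  assumes AB: "A \<le> B" and c: "real A + c > 0"
  shows "(\<Sum>n\<in>{A<..B}. 1 / (real n + c)) \<le> ln (real B + c) - ln (real A + c)"
  using AB
proof (induction B rule: dec_induct)
  case base
  then show ?case by simp
next
  case (step n)
  have pos: "real n + c > 0" using step.hyps c by linarith
  have "ln ((real n + c) / (real n + 1 + c)) \<le> (real n + c) / (real n + 1 + c) - 1"
    using pos by (intro ln_le_minus_one) simp
  also have "\<dots> = - 1 / (real n + 1 + c)" using pos by (simp add: field_simps)
  finally have st: "1 / (real n + 1 + c) \<le> ln (real n + 1 + c) - ln (real n + c)"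
    using pos by (simp add: ln_div)
  have "{A<..Suc n} = insert (Suc n) {A<..n}" using step.hyps by auto
  then have "(\<Sum>n\<in>{A<..Suc n}. 1 / (real n + c)) = 1 / (real n + 1 + c) + (\<Sum>n\<in>{A<..n}. 1 / (real n + c))"
    by (simp add: add.commute add.left_commute)
  then show ?case using step.IH st by (simp add: add.commute add.left_commute)
qed

lemma harm_lo:
  assumes AB: "A \<le> B" and c: "real A + 1 + c > 0"
  shows "ln (real B + 1 + c) - ln (real A + 1 + c) \<le> (\<Sum>n\<in>{A<..B}. 1 / (real n + c))"
  using AB
proof (induction B rule: dec_induct)
  case base
  then show ?case by simp
next
  case (step n)
  have pos: "real n + 1 + c > 0" using step.hyps c by linarith
  have "ln (1 + 1 / (real n + 1 + c)) \<le> 1 / (real n + 1 + c)"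
    using pos by (intro ln_add_one_self_le_self) simp
  moreover have "1 + 1 / (real n + 1 + c) = (real n + 1 + 1 + c) / (real n + 1 + c)" using pos by (simp add: field_simps)
  ultimately have st: "ln (real n + 1 + 1 + c) - ln (real n + 1 + c) \<le> 1 / (real n + 1 + c)"
    using pos by (simp add: ln_div)
  have "{A<..Suc n} = insert (Suc n) {A<..n}" using step.hyps by auto
  then have "(\<Sum>n\<in>{A<..Suc n}. 1 / (real n + c)) = 1 / (real n + 1 + c) + (\<Sum>n\<in>{A<..n}. 1 / (real n + c))"
    by (simp add: add.commute add.left_commute)
  then show ?case using step.IH st by (simp add: add.commute add.left_commute)
qed

lemma sq_tail:
  assumes AB: "A \<le> B" and A: "1 \<le> A"
  shows "(\<Sum>n\<in>{A<..B}. 1 / (real n)^2) \<le> 1 / real A - 1 / real B"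
  using AB
proof (induction B rule: dec_induct)
  case base
  then show ?case by simp
next
  case (step n)
  have pos: "real n \<ge> 1" using step.hyps A by simp
  have st: "1 / (real n + 1)^2 \<le> 1 / real n - 1 / (real n + 1)"
  proof -
    have "1 / real n - 1 / (real n + 1) = 1 / (real n * (real n + 1))" using pos by (simp add: field_simps)
    moreover have "real n * (real n + 1) \<le> (real n + 1)^2" using pos by (simp add: power2_eq_square)
    ultimately show ?thesis using pos by (simp add: frac_le)
  qed
  have "{A<..Suc n} = insert (Suc n) {A<..n}" using step.hyps by auto
  then have eqs: "(\<Sum>n\<in>{A<..Suc n}. 1 / (real n)^2) = 1 / (real n + 1)^2 + (\<Sum>n\<in>{A<..n}. 1 / (real n)^2)"
    by (simp add: add.commute)
  have e: "1 / real (Suc n) = 1 / (real n + 1)" by simp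
  show ?case using eqs step.IH st e by linarith
qed

lemma shell_real:
  assumes "0 \<le> R" "R \<le> Y"
  shows "shell (nat \<lfloor>R\<rfloor>) (nat \<lfloor>Y\<rfloor>) = {p. R < real_of_int (qf p) \<and> real_of_int (qf p) \<le> Y}"
proof -
  have i1: "int (nat \<lfloor>R\<rfloor>) = \<lfloor>R\<rfloor>" using assms by simp
  have i2: "int (nat \<lfloor>Y\<rfloor>) = \<lfloor>Y\<rfloor>" using assms by simp
  have "\<lfloor>R\<rfloor> < z \<longleftrightarrow> R < real_of_int z" for z by (rule floor_less_iff)
  moreover have "z \<le> \<lfloor>Y\<rfloor> \<longleftrightarrow> real_of_int z \<le> Y" for z by (rule le_floor_iff)
  ultimately show ?thesis unfolding shell_def i1 i2 by blast
qed

lemma ball_real: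
  assumes "0 \<le> R"
  shows "{p. real_of_int (qf p) \<le> R} = {p. qf p \<le> int (nat \<lfloor>R\<rfloor>)}"
proof -
  have i1: "int (nat \<lfloor>R\<rfloor>) = \<lfloor>R\<rfloor>" using assms by simp
  have "z \<le> \<lfloor>R\<rfloor> \<longleftrightarrow> real_of_int z \<le> R" for z by (rule le_floor_iff)
  then show ?thesis unfolding i1 by blast
qed

lemma qf_zero: "qf p = 0 \<longleftrightarrow> p = (0,0)"
proof (cases p)
  case (Pair a b)
  have "a^2 + b^2 = 0 \<longleftrightarrow> a = 0 \<and> b = 0" by (rule sum_power2_eq_zero_iff)
  then show ?thesis unfolding Pair qf_def by simp
qed

lemma ball_split: "{p. qf p \<le> int n} = insert (0,0) (shell 0 n)"
proof (rule set_eqI)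
  fix p
  show "p \<in> {p. qf p \<le> int n} \<longleftrightarrow> p \<in> insert (0,0) (shell 0 n)"
    using qf_nonneg[of p] qf_zero[of p] unfolding shell_def by (cases "p = (0,0)") auto
qed

lemma sum_shell_real:
  "(\<Sum>p\<in>shell A B. F (real_of_int (qf p))) = (\<Sum>p\<in>shell A B. F (real (nat (qf p))))"
proof (intro sum.cong refl)
  fix p show "F (real_of_int (qf p)) = F (real (nat (qf p)))" using qf_nonneg[of p] by simp
qed

lemma sqrt_div: "1 \<le> n \<Longrightarrow> sqrt n / n = 1 / sqrt n" for n :: real
proof -
  assume n: "1 \<le> n"
  have "sqrt n * sqrt n = n" using n by simp
  moreover have "sqrt n > 0" using n by simp
  ultimately show ?thesis by (metis divide_divide_eq_right div_by_1 nonzero_mult_div_cancel_left less_irrefl)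
qed

lemma EE_le: "1 \<le> n \<Longrightarrow> EE n \<le> 5 * sqrt (real n)"
proof -
  assume "1 \<le> n"
  then have "1 \<le> sqrt (real n)" by simp
  then show ?thesis unfolding EE_def by simp
qed

lemma F1_err:
  assumes b: "0 < b"
  defines "f \<equiv> \<lambda>n::nat. 1 / (real n + b)"
  shows "EE R0 * f R0 + EE 0 * f 0 + (\<Sum>n\<in>{0..<R0}. EE n * (f n - f (Suc n))) \<le> 19 + 3 / b"
proof -
  have t1: "EE R0 * f R0 \<le> 4 + 1 / b"
  proof (cases "R0 = 0")
    case True then show ?thesis by (simp add: EE_def f_def)
  next
    case False
    then have R: "real R0 \<ge> 1" by simp
    have "EE R0 * f R0 = 4 * (sqrt R0 / (R0 + b)) + 1 / (R0 + b)" unfolding EE_def f_def by (simp add: distrib_right add_divide_distrib)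
    moreover have "sqrt R0 / (R0 + b) \<le> sqrt R0 / R0" using b R by (intro divide_left_mono) auto
    moreover have "sqrt R0 / R0 \<le> 1" using R sqrt_div[OF R] by simp
    moreover have "1 / (R0 + b) \<le> 1 / b" using b by (simp add: frac_le)
    ultimately show ?thesis by linarith
  qed
  have t2: "EE 0 * f 0 = 1 / b" by (simp add: EE_def f_def)
  have t3: "(\<Sum>n\<in>{0..<R0}. EE n * (f n - f (Suc n))) \<le> 1 / b + 15"
  proof (cases "R0 = 0")
    case True then show ?thesis using b by simp
  next
    case False
    have split: "{0..<R0} = insert 0 {1..<R0}" using False by auto
    have z0: "0 \<le> f (Suc 0)" using b by (simp add: f_def)
    have z: "EE 0 * (f 0 - f (Suc 0)) \<le> 1 / b"
      using z0 by (simp add: EE_def f_def)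
    have each: "EE n * (f n - f (Suc n)) \<le> 5 * (1 / (real n * sqrt (real n)))" if n: "1 \<le> n" for n
    proof -
      have rn: "real n \<ge> 1" using n by simp
      have d: "f n - f (Suc n) = 1 / ((real n + b) * (real n + 1 + b))" using b unfolding f_def by (simp add: field_simps)
      have "(real n) * (real n) \<le> (real n + b) * (real n + 1 + b)" using b rn by (intro mult_mono) auto
      then have d2: "f n - f (Suc n) \<le> 1 / (real n * real n)" unfolding d using rn by (intro frac_le) auto
      have "EE n * (f n - f (Suc n)) \<le> 5 * sqrt (real n) * (1 / (real n * real n))"
        using EE_le[OF n] d2 b by (intro mult_mono) (auto simp: f_def EE_def field_simps)
      also have "\<dots> = 5 * (1 / (real n * sqrt (real n)))"
      proof -
        have "sqrt (real n) * sqrt (real n) = real n" by simp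
        then show ?thesis using rn by (simp add: field_simps)
      qed
      finally show ?thesis .
    qed
    have "(\<Sum>n\<in>{1..<R0}. EE n * (f n - f (Suc n))) \<le> (\<Sum>n\<in>{1..<R0}. 5 * (1 / (real n * sqrt (real n))))"
      by (intro sum_mono each) auto
    also have "\<dots> \<le> (\<Sum>n\<in>{1..R0}. 5 * (1 / (real n * sqrt (real n))))"
      by (intro sum_mono2) auto
    also have "\<dots> = 5 * (\<Sum>n\<in>{1..R0}. 1 / (real n * sqrt (real n)))" by (simp add: sum_distrib_left)
    also have "\<dots> \<le> 15" using sum32'[of R0] by simp
    finally show ?thesis unfolding split using z by (simp add: sum.insert)
  qed
  show ?thesis using t1 t2 t3 by linarith
qed

lemma F1_bounds:
  assumes b: "0 < b"
  shows "(\<Sum>p\<in>{p. qf p \<le> int R0}. 1 / (real_of_int (qf p) + b)) \<le> 1 / b + pi * (ln (real R0 + b) - ln b) + 19 + 3 / b"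
    and "1 / b + pi * (ln (real R0 + 1 + b) - ln (1 + b)) - 19 - 3 / b \<le> (\<Sum>p\<in>{p. qf p \<le> int R0}. 1 / (real_of_int (qf p) + b))"
proof -
  define f where "f n = 1 / (real n + b)" for n :: nat
  have eq: "(\<Sum>p\<in>{p. qf p \<le> int R0}. 1 / (real_of_int (qf p) + b)) = 1 / b + (\<Sum>p\<in>shell 0 R0. f (nat (qf p)))"
  proof -
    have "(0,0) \<notin> shell 0 R0" by (simp add: shell_def qf_def)
    then have "(\<Sum>p\<in>{p. qf p \<le> int R0}. 1 / (real_of_int (qf p) + b)) = 1 / b + (\<Sum>p\<in>shell 0 R0. 1 / (real_of_int (qf p) + b))"
      unfolding ball_split using fin_shell by (simp add: qf_def)
    also have "(\<Sum>p\<in>shell 0 R0. 1 / (real_of_int (qf p) + b)) = (\<Sum>p\<in>shell 0 R0. f (nat (qf p)))"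
      unfolding f_def by (rule sum_shell_real)
    finally show ?thesis .
  qed
  have ab: "\<bar>(\<Sum>p\<in>shell 0 R0. f (nat (qf p))) - pi * (\<Sum>n\<in>{0<..R0}. f n)\<bar>
          \<le> EE R0 * f R0 + EE 0 * f 0 + (\<Sum>n\<in>{0..<R0}. EE n * (f n - f (Suc n)))"
    by (rule abel_bound) (use b in \<open>auto simp: f_def frac_le\<close>)
  have err: "EE R0 * f R0 + EE 0 * f 0 + (\<Sum>n\<in>{0..<R0}. EE n * (f n - f (Suc n))) \<le> 19 + 3 / b"
    unfolding f_def using F1_err[OF b] by simp
  have hu: "(\<Sum>n\<in>{0<..R0}. f n) \<le> ln (real R0 + b) - ln (real 0 + b)"
    unfolding f_def by (rule harm_up) (use b in auto)
  have hl: "ln (real R0 + 1 + b) - ln (real 0 + 1 + b) \<le> (\<Sum>n\<in>{0<..R0}. f n)"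
    unfolding f_def by (rule harm_lo) (use b in auto)
  have hu': "pi * (\<Sum>n\<in>{0<..R0}. f n) \<le> pi * (ln (real R0 + b) - ln b)"
    using mult_left_mono[OF hu, of pi] pi_gt_zero by simp
  have hl': "pi * (ln (real R0 + 1 + b) - ln (1 + b)) \<le> pi * (\<Sum>n\<in>{0<..R0}. f n)"
    using mult_left_mono[OF hl, of pi] pi_gt_zero by simp
  note ab1 = abs_le_D1[OF ab] and ab2 = abs_le_D2[OF ab]
  show "(\<Sum>p\<in>{p. qf p \<le> int R0}. 1 / (real_of_int (qf p) + b)) \<le> 1 / b + pi * (ln (real R0 + b) - ln b) + 19 + 3 / b"
    using eq ab1 err hu' by linarith
  show "1 / b + pi * (ln (real R0 + 1 + b) - ln (1 + b)) - 19 - 3 / b \<le> (\<Sum>p\<in>{p. qf p \<le> int R0}. 1 / (real_of_int (qf p) + b))"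
    using eq ab2 err hl' by linarith
qed

lemma tail_fin:
  assumes A: "1 \<le> A" and AB: "A \<le> B"
  shows "(\<Sum>p\<in>shell A B. 1 / (real_of_int (qf p))^2) \<le> 59 / real A"
proof -
  define f where "f n = 1 / (real n)^2" for n :: nat
  have rA: "real A \<ge> 1" using A by simp
  have eq: "(\<Sum>p\<in>shell A B. 1 / (real_of_int (qf p))^2) = (\<Sum>p\<in>shell A B. f (nat (qf p)))"
    unfolding f_def by (rule sum_shell_real)
  have anti: "f (Suc n) \<le> f n" if "A \<le> n" for n
  proof -
    have "real n \<ge> 1" using that A by simp
    then show ?thesis unfolding f_def by (intro frac_le) (auto intro: power_mono)
  qed
  have ab: "\<bar>(\<Sum>p\<in>shell A B. f (nat (qf p))) - pi * (\<Sum>n\<in>{A<..B}. f n)\<bar>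
          \<le> EE B * f B + EE A * f A + (\<Sum>n\<in>{A..<B}. EE n * (f n - f (Suc n)))"
    apply (rule abel_bound[OF AB])
     apply (simp add: f_def)
    apply (rule anti)
    apply simp
    done
  have ef: "EE n * f n \<le> 5 / real A" if "A \<le> n" for n
  proof -
    have n: "real n \<ge> 1" "real n \<ge> real A" using that A by auto
    have "1 * real n \<le> real n * real n" using n by (intro mult_right_mono) auto
    then have "sqrt (real n) \<le> real n" using n by (intro real_le_lsqrt) (auto simp: power2_eq_square)
    then have "EE n \<le> 5 * real n" using EE_le[of n] that A by simp
    then have "EE n * f n \<le> 5 * real n * f n" unfolding f_def by (intro mult_right_mono) auto
    also have "\<dots> = 5 / real n" unfolding f_def using n by (simp add: power2_eq_square)
    also have "\<dots> \<le> 5 / real A" using n rA by (intro divide_left_mono) auto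
    finally show ?thesis .
  qed
  have each: "EE n * (f n - f (Suc n)) \<le> 15 / real A * (1 / (real n * sqrt (real n)))" if "A \<le> n" for n
  proof -
    have n: "real n \<ge> 1" "real n \<ge> real A" using that A by auto
    have d: "f n - f (Suc n) \<le> 3 / (real n)^3"
    proof -
      have "f n - f (Suc n) = 1 / (real n)^2 - 1 / (real n + 1)^2" unfolding f_def by simp
      also have "\<dots> = ((real n + 1)^2 - (real n)^2) / ((real n)^2 * (real n + 1)^2)"
        using n by (simp add: diff_frac_eq)
      also have "(real n + 1)^2 - (real n)^2 = 2 * real n + 1" by (simp add: power2_eq_square algebra_simps)
      finally have "f n - f (Suc n) = (2 * real n + 1) / ((real n)^2 * (real n + 1)^2)" .
      also have "\<dots> \<le> (3 * real n) / ((real n)^2 * (real n)^2)"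
        using n by (intro frac_le mult_mono power_mono) auto
      also have "\<dots> = 3 / (real n)^3" using n by (simp add: field_simps power2_eq_square power3_eq_cube)
      finally show ?thesis .
    qed
    have "EE n * (f n - f (Suc n)) \<le> 5 * sqrt (real n) * (3 / (real n)^3)"
      using EE_le[of n] d that A anti[OF that] by (intro mult_mono) (auto simp: EE_def)
    also have "\<dots> = 15 / (real n * (real n * sqrt (real n)))"
    proof -
      have "sqrt (real n) * sqrt (real n) = real n" by simp
      then show ?thesis using n by (simp add: field_simps power3_eq_cube)
    qed
    also have "\<dots> \<le> 15 / (real A * (real n * sqrt (real n)))"
      using n rA by (intro divide_left_mono mult_right_mono mult_pos_pos) auto
    also have "\<dots> = 15 / real A * (1 / (real n * sqrt (real n)))" by simp
    finally show ?thesis .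
  qed
  have s3: "(\<Sum>n\<in>{A..<B}. EE n * (f n - f (Suc n))) \<le> 45 / real A"
  proof -
    have "(\<Sum>n\<in>{A..<B}. EE n * (f n - f (Suc n))) \<le> (\<Sum>n\<in>{A..<B}. 15 / real A * (1 / (real n * sqrt (real n))))"
      by (intro sum_mono each) auto
    also have "\<dots> \<le> (\<Sum>n\<in>{1..B}. 15 / real A * (1 / (real n * sqrt (real n))))"
      using A by (intro sum_mono2) auto
    also have "\<dots> = 15 / real A * (\<Sum>n\<in>{1..B}. 1 / (real n * sqrt (real n)))" by (simp add: sum_distrib_left)
    also have "\<dots> \<le> 15 / real A * 3" using sum32'[of B] rA by (intro mult_left_mono) auto
    finally show ?thesis by simp
  qed
  have main: "pi * (\<Sum>n\<in>{A<..B}. f n) \<le> 4 / real A"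
  proof -
    have "0 \<le> 1 / real B" by simp
    then have "(\<Sum>n\<in>{A<..B}. f n) \<le> 1 / real A" using sq_tail[OF AB A] unfolding f_def by linarith
    then have "pi * (\<Sum>n\<in>{A<..B}. f n) \<le> pi * (1 / real A)" using pi_gt_zero by (intro mult_left_mono) auto
    also have "\<dots> \<le> 4 * (1 / real A)" using pi_less_4 rA by (intro mult_right_mono) auto
    finally show ?thesis by simp
  qed
  show ?thesis using eq abs_le_D1[OF ab] ef[of B] ef[of A] AB s3 main by simp
qed

lemma tail_inf:
  assumes Y: "1 \<le> Y"
  shows "(\<lambda>p. 1 / (real_of_int (qf p))^2) summable_on {p. Y < real_of_int (qf p)}"
    and "(\<Sum>\<^sub>\<infinity>p\<in>{p. Y < real_of_int (qf p)}. 1 / (real_of_int (qf p))^2) \<le> 118 / Y"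
proof -
  define A where "A = nat \<lfloor>Y\<rfloor>"
  have A1: "1 \<le> A" unfolding A_def using Y by linarith
  have AY: "59 / real A \<le> 118 / Y"
  proof -
    have "real A > Y - 1" unfolding A_def using Y by linarith
    then have "Y \<le> 2 * real A" using A1 by linarith
    then show ?thesis using Y A1 by (simp add: field_simps)
  qed
  have bnd: "(\<Sum>p\<in>F. 1 / (real_of_int (qf p))^2) \<le> 118 / Y"
    if F: "finite F" "F \<subseteq> {p. Y < real_of_int (qf p)}" for F
  proof -
    define B where "B = A + (\<Sum>p\<in>F. nat (qf p))"
    have sub: "F \<subseteq> shell A B"
    proof
      fix p assume p: "p \<in> F"
      then have "Y < real_of_int (qf p)" using F by auto
      then have "\<lfloor>Y\<rfloor> < qf p" by (simp add: floor_less_iff)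
      then have "int A < qf p" unfolding A_def using Y by simp
      moreover have "nat (qf p) \<le> (\<Sum>p\<in>F. nat (qf p))" using p F(1) by (intro member_le_sum) auto
      then have "qf p \<le> int B" unfolding B_def using qf_nonneg[of p] by linarith
      ultimately show "p \<in> shell A B" by (simp add: shell_def)
    qed
    have AB: "A \<le> B" unfolding B_def by simp
    have "(\<Sum>p\<in>F. 1 / (real_of_int (qf p))^2) \<le> (\<Sum>p\<in>shell A B. 1 / (real_of_int (qf p))^2)"
      by (rule sum_mono2[OF fin_shell sub]) auto
    also have "\<dots> \<le> 59 / real A" by (rule tail_fin[OF A1 AB])
    finally show ?thesis using AY by linarith
  qed
  show sm: "(\<lambda>p. 1 / (real_of_int (qf p))^2) summable_on {p. Y < real_of_int (qf p)}"
    by (rule nonneg_bdd_above_summable_on) (auto intro!: bdd_aboveI2 bnd)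
  show "(\<Sum>\<^sub>\<infinity>p\<in>{p. Y < real_of_int (qf p)}. 1 / (real_of_int (qf p))^2) \<le> 118 / Y"
    by (rule infsum_le_finite_sums[OF sm bnd]) auto
qed

lemma annulus:
  assumes R: "1 \<le> R" and D: "2 \<le> D" "sqrt R \<le> D"
  shows "(\<Sum>p\<in>{p. R < real_of_int (qf p) \<and> real_of_int (qf p) \<le> 2 * R}. 1 / (real_of_int (qf p) - R + D))
          \<le> pi * (ln (R + D) - ln (D - 1)) + 28"
proof -
  define A where "A = nat \<lfloor>R\<rfloor>"
  define B where "B = nat \<lfloor>2 * R\<rfloor>"
  define f where "f n = 1 / (real n - R + D)" for n :: nat
  have set: "{p. R < real_of_int (qf p) \<and> real_of_int (qf p) \<le> 2 * R} = shell A B"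
    unfolding A_def B_def using R by (intro shell_real[symmetric]) auto
  have AB: "A \<le> B" unfolding A_def B_def using R by (simp add: floor_mono nat_mono)
  have Agt: "real A > R - 1" unfolding A_def using R by linarith
  have Ble: "real B \<le> 2 * R" unfolding B_def using R by linarith
  have pos: "real n - R + D > D - 1" if "A \<le> n" for n using that Agt by linarith
  have eq: "(\<Sum>p\<in>shell A B. 1 / (real_of_int (qf p) - R + D)) = (\<Sum>p\<in>shell A B. f (nat (qf p)))"
    unfolding f_def by (rule sum_shell_real)
  have anti: "f (Suc n) \<le> f n" if "A \<le> n" for n
    unfolding f_def using pos[OF that] D by (intro frac_le) auto
  have nonneg: "0 \<le> f n" if "A \<le> n" for n unfolding f_def using pos[OF that] D by simp
  have ab: "\<bar>(\<Sum>p\<in>shell A B. f (nat (qf p))) - pi * (\<Sum>n\<in>{A<..B}. f n)\<bar>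
          \<le> EE B * f B + EE A * f A + (\<Sum>n\<in>{A..<B}. EE n * (f n - f (Suc n)))"
    by (rule abel_bound[OF AB]) (auto intro: anti nonneg)
  have EEmono: "EE n \<le> EE B" if "n \<le> B" for n unfolding EE_def using that by simp
  have err: "EE B * f B + EE A * f A + (\<Sum>n\<in>{A..<B}. EE n * (f n - f (Suc n))) \<le> 2 * EE B * f A"
  proof -
    have "(\<Sum>n\<in>{A..<B}. EE n * (f n - f (Suc n))) \<le> (\<Sum>n\<in>{A..<B}. EE B * (f n - f (Suc n)))"
      using anti EEmono by (intro sum_mono mult_right_mono) auto
    also have "\<dots> = EE B * (\<Sum>n\<in>{A..<B}. (f n - f (Suc n)))" by (simp add: sum_distrib_left)
    also have "(\<Sum>n\<in>{A..<B}. (f n - f (Suc n))) = f A - f B"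
    proof -
      have tel: "(\<Sum>n\<in>{A..<B}. f (Suc n) - f n) = f B - f A" by (rule sum_Suc_diff'[OF AB])
      have "(\<Sum>n\<in>{A..<B}. f n - f (Suc n)) = (\<Sum>n\<in>{A..<B}. f n) - (\<Sum>n\<in>{A..<B}. f (Suc n))"
        by (rule sum_subtractf)
      moreover have "(\<Sum>n\<in>{A..<B}. f (Suc n) - f n) = (\<Sum>n\<in>{A..<B}. f (Suc n)) - (\<Sum>n\<in>{A..<B}. f n)"
        by (rule sum_subtractf)
      ultimately show ?thesis using tel by linarith
    qed
    finally have "(\<Sum>n\<in>{A..<B}. EE n * (f n - f (Suc n))) \<le> EE B * (f A - f B)" .
    moreover have "EE A * f A \<le> EE B * f A" using EEmono[OF AB] nonneg[of A] by (intro mult_right_mono) auto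
    ultimately show ?thesis by (simp add: algebra_simps)
  qed
  have fA: "f A \<le> 2 / D" unfolding f_def using pos[of A] D by (simp add: field_simps)
  have EEB: "EE B \<le> 7 * sqrt R"
  proof -
    have "sqrt (real B) \<le> sqrt (2 * R)" using Ble by simp
    also have "sqrt (2 * R) \<le> 3 / 2 * sqrt R"
    proof -
      have "(3 / 2 * sqrt R)^2 = 9 / 4 * R" using R by (simp add: power_mult_distrib power2_eq_square)
      then have "2 * R \<le> (3 / 2 * sqrt R)^2" using R by simp
      then show ?thesis by (rule real_le_lsqrt[rotated]) (use R in simp)
    qed
    finally have "sqrt (real B) \<le> 3 / 2 * sqrt R" .
    moreover have "1 \<le> sqrt R" using R by simp
    ultimately show ?thesis unfolding EE_def by linarith
  qed
  have err2: "2 * EE B * f A \<le> 28"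
  proof -
    have "2 * EE B * f A \<le> 2 * (7 * sqrt R) * (2 / D)"
      using EEB fA nonneg[of A] R by (intro mult_mono) (auto simp: EE_def)
    also have "\<dots> = 28 * (sqrt R / D)" by simp
    also have "\<dots> \<le> 28 * 1" using D by (intro mult_left_mono) (auto simp: divide_le_eq)
    finally show ?thesis by simp
  qed
  have hu: "(\<Sum>n\<in>{A<..B}. f n) \<le> ln (real B + (D - R)) - ln (real A + (D - R))"
    unfolding f_def using harm_up[OF AB, of "D - R"] pos[of A] D by (simp add: algebra_simps)
  have l1: "ln (real B + (D - R)) \<le> ln (R + D)" using Ble pos[OF AB] D by (subst ln_le_cancel_iff) auto
  have l2: "ln (D - 1) \<le> ln (real A + (D - R))" using pos[of A] D by (subst ln_le_cancel_iff) auto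
  have main: "pi * (\<Sum>n\<in>{A<..B}. f n) \<le> pi * (ln (R + D) - ln (D - 1))"
    using hu l1 l2 pi_gt_zero by (intro mult_left_mono) auto
  show ?thesis unfolding set using eq abs_le_D1[OF ab] err err2 main by linarith
qed

abbreviation Q :: "int \<times> int \<Rightarrow> real" where "Q p \<equiv> real_of_int (qf p)"

definition hh :: "real \<Rightarrow> real \<Rightarrow> real \<Rightarrow> int \<times> int \<Rightarrow> real" where
  "hh b R t p = 1 / (Q p + b) - (if Q p > R then 1 / (Q p + t) else 0)"

definition gg :: "real \<Rightarrow> real \<Rightarrow> real \<Rightarrow> real" where
  "gg b R t = (\<Sum>\<^sub>\<infinity>p\<in>UNIV. hh b R t p)"

definition TT :: "real \<Rightarrow> real \<Rightarrow> real \<Rightarrow> real" where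
  "TT b R t = (\<Sum>\<^sub>\<infinity>p\<in>{p. R < Q p}. 1 / (Q p + b) - 1 / (Q p + t))"

lemma Q_nonneg: "0 \<le> Q p" using qf_nonneg[of p] by simp

lemma sq_summ: "1 \<le> Y \<Longrightarrow> (\<lambda>p. c * (1 / (Q p)^2)) summable_on {p. Y < Q p}"
  by (intro summable_on_cmult_right tail_inf(1))

lemma tail_term_bound:
  assumes R: "1 \<le> R" and b: "0 < b" and D: "0 < D" and t: "-R + D \<le> t" and p: "R < Q p"
  shows "\<bar>1 / (Q p + b) - 1 / (Q p + t)\<bar> \<le> (\<bar>t - b\<bar> * (R + D) / D) * (1 / (Q p)^2)"
proof -
  have Q1: "Q p > 0" using p R by linarith
  have qb: "Q p + b \<ge> Q p" using b by simp
  have qt: "Q p + t \<ge> Q p * D / (R + D)"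
  proof -
    have "(Q p - R + D) * (R + D) - Q p * D = (Q p - R) * R + D * D" by (simp add: algebra_simps)
    also have "\<dots> \<ge> 0" using p R D by simp
    finally have "Q p * D \<le> (Q p - R + D) * (R + D)" by simp
    then have "Q p * D / (R + D) \<le> Q p - R + D" using R D by (simp add: divide_le_eq)
    then show ?thesis using t by linarith
  qed
  have qt0: "Q p * D / (R + D) > 0" using Q1 R D by simp
  have eq: "1 / (Q p + b) - 1 / (Q p + t) = (t - b) / ((Q p + b) * (Q p + t))"
    using Q1 qb qt qt0 by (simp add: diff_frac_eq)
  have "\<bar>(t - b) / ((Q p + b) * (Q p + t))\<bar> = \<bar>t - b\<bar> / ((Q p + b) * (Q p + t))"
    using Q1 qb qt qt0 by (simp add: abs_div)
  also have "\<dots> \<le> \<bar>t - b\<bar> / (Q p * (Q p * D / (R + D)))"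
  proof (rule divide_left_mono)
    show "Q p * (Q p * D / (R + D)) \<le> (Q p + b) * (Q p + t)" using Q1 qb qt qt0 by (intro mult_mono) auto
    have "0 < (Q p + b) * (Q p + t)" using Q1 qb qt qt0 by (intro mult_pos_pos) auto
    moreover have "0 < Q p * (Q p * D / (R + D))" using Q1 qt0 by (intro mult_pos_pos) auto
    ultimately show "0 < (Q p + b) * (Q p + t) * (Q p * (Q p * D / (R + D)))" by (rule mult_pos_pos)
  qed simp
  also have "\<dots> = (\<bar>t - b\<bar> * (R + D) / D) * (1 / (Q p)^2)"
    using Q1 D R by (simp add: field_simps power2_eq_square)
  finally show ?thesis unfolding eq .
qed

lemma TT_summable:
  assumes R: "1 \<le> R" and b: "0 < b" and D: "0 < D" and t: "-R + D \<le> t"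
  shows "(\<lambda>p. 1 / (Q p + b) - 1 / (Q p + t)) summable_on {p. R < Q p}"
proof -
  define K where "K = \<bar>t - b\<bar> * (R + D) / D"
  have g: "(\<lambda>p. norm (K * (1 / (Q p)^2))) summable_on {p. R < Q p}"
    by (rule summable_on_iff_abs_summable_on_real[THEN iffD1, OF sq_summ[OF R, of K]])
  have "(\<lambda>p. norm (1 / (Q p + b) - 1 / (Q p + t))) summable_on {p. R < Q p}"
  proof (rule Infinite_Sum.abs_summable_on_comparison_test[OF g])
    fix p assume "p \<in> {p. R < Q p}"
    then have "R < Q p" by simp
    from tail_term_bound[OF R b D t this] have "\<bar>1 / (Q p + b) - 1 / (Q p + t)\<bar> \<le> K * (1 / (Q p)^2)"
      unfolding K_def .
    also have "\<dots> \<le> \<bar>K * (1 / (Q p)^2)\<bar>" by (rule abs_ge_self)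
    finally show "norm (1 / (Q p + b) - 1 / (Q p + t)) \<le> norm (K * (1 / (Q p)^2))" by simp
  qed
  then show ?thesis by (rule summable_on_iff_abs_summable_on_real[THEN iffD2])
qed

lemma In_finite: "finite {p. Q p \<le> R}" by (rule fin_ball)

lemma gg_split:
  assumes R: "1 \<le> R" and b: "0 < b" and t: "-R < t"
  shows "gg b R t = (\<Sum>p\<in>{p. Q p \<le> R}. 1 / (Q p + b)) + TT b R t"
proof -
  have U: "(UNIV :: (int \<times> int) set) = {p. Q p \<le> R} \<union> {p. R < Q p}" by auto
  have s1: "hh b R t summable_on {p. Q p \<le> R}" by (rule summable_on_finite[OF In_finite])
  have s2': "(\<lambda>p. 1 / (Q p + b) - 1 / (Q p + t)) summable_on {p. R < Q p}"
    using TT_summable[OF R b, of "R + t" t] t by simp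
  have c2: "hh b R t p = 1 / (Q p + b) - 1 / (Q p + t)" if "p \<in> {p. R < Q p}" for p
    using that unfolding hh_def by simp
  have s2: "hh b R t summable_on {p. R < Q p}"
  proof -
    have "hh b R t summable_on {p. R < Q p} \<longleftrightarrow> (\<lambda>p. 1 / (Q p + b) - 1 / (Q p + t)) summable_on {p. R < Q p}"
      by (rule summable_on_cong) (rule c2)
    then show ?thesis using s2' by simp
  qed
  have disj: "{p. Q p \<le> R} \<inter> {p. R < Q p} = {}" by auto
  have "gg b R t = infsum (hh b R t) ({p. Q p \<le> R} \<union> {p. R < Q p})"
    unfolding gg_def by (simp only: U[symmetric])
  also have "\<dots> = infsum (hh b R t) {p. Q p \<le> R} + infsum (hh b R t) {p. R < Q p}"
    by (rule infsum_Un_disjoint[OF s1 s2 disj])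
  also have "infsum (hh b R t) {p. Q p \<le> R} = (\<Sum>p\<in>{p. Q p \<le> R}. 1 / (Q p + b))"
  proof -
    have "infsum (hh b R t) {p. Q p \<le> R} = sum (hh b R t) {p. Q p \<le> R}" by (rule infsum_finite[OF In_finite])
    also have "\<dots> = (\<Sum>p\<in>{p. Q p \<le> R}. 1 / (Q p + b))"
    proof (rule sum.cong[OF refl])
      fix p assume "p \<in> {p. Q p \<le> R}"
      then have "\<not> R < Q p" by simp
      then show "hh b R t p = 1 / (Q p + b)" unfolding hh_def by simp
    qed
    finally show ?thesis .
  qed
  also have "infsum (hh b R t) {p. R < Q p} = TT b R t"
    unfolding TT_def by (rule infsum_cong[OF c2])
  finally show ?thesis .
qed

lemma TT_mono:
  assumes R: "1 \<le> R" and b: "0 < b" and t: "-R < t" and tt: "t \<le> t'"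
  shows "TT b R t \<le> TT b R t'"
  unfolding TT_def
proof (rule infsum_mono)
  show "(\<lambda>p. 1 / (Q p + b) - 1 / (Q p + t)) summable_on {p. R < Q p}"
    using TT_summable[OF R b, of "R + t" t] t by simp
  show "(\<lambda>p. 1 / (Q p + b) - 1 / (Q p + t')) summable_on {p. R < Q p}"
    using TT_summable[OF R b, of "R + t" t'] t tt by simp
  fix p assume "p \<in> {p. R < Q p}"
  then have "Q p + t > 0" using t by simp
  then show "1 / (Q p + b) - 1 / (Q p + t) \<le> 1 / (Q p + b) - 1 / (Q p + t')"
    using tt by (simp add: frac_le)
qed

lemma TT_upper:
  assumes R: "1 \<le> R" and b: "0 < b" and t: "-R < t" "t \<le> R"
  shows "TT b R t \<le> 118"
proof -
  have "TT b R t \<le> (\<Sum>\<^sub>\<infinity>p\<in>{p. R < Q p}. R * (1 / (Q p)^2))"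
    unfolding TT_def
  proof (rule infsum_mono)
    show "(\<lambda>p. 1 / (Q p + b) - 1 / (Q p + t)) summable_on {p. R < Q p}"
      using TT_summable[OF R b, of "R + t" t] t by simp
    show "(\<lambda>p. R * (1 / (Q p)^2)) summable_on {p. R < Q p}" by (rule sq_summ[OF R])
    fix p assume p: "p \<in> {p. R < Q p}"
    then have Q1: "Q p > 0" "Q p > R" using R by auto
    show "1 / (Q p + b) - 1 / (Q p + t) \<le> R * (1 / (Q p)^2)"
    proof (cases "t \<le> b")
      case True
      then have "1 / (Q p + b) \<le> 1 / (Q p + t)" using Q1 t by (intro frac_le) auto
      moreover have "0 \<le> R * (1 / (Q p)^2)" using R by simp
      ultimately show ?thesis by linarith
    next
      case False
      have "1 / (Q p + b) - 1 / (Q p + t) = (t - b) / ((Q p + b) * (Q p + t))"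
        using Q1 b False by (simp add: diff_frac_eq)
      also have "\<dots> \<le> R / (Q p * Q p)"
        using Q1 b False t by (intro frac_le mult_mono) auto
      also have "\<dots> = R * (1 / (Q p)^2)" by (simp add: power2_eq_square)
      finally show ?thesis .
    qed
  qed
  also have "\<dots> = R * (\<Sum>\<^sub>\<infinity>p\<in>{p. R < Q p}. 1 / (Q p)^2)" by (rule infsum_cmult_right')
  also have "\<dots> \<le> R * (118 / R)" using tail_inf(2)[OF R] R by (intro mult_left_mono) auto
  also have "\<dots> = 118" using R by simp
  finally show ?thesis .
qed

lemma TT_lower:
  assumes R: "1 \<le> R" and b: "0 < b" "b \<le> R" and D: "2 \<le> D" "sqrt R \<le> D" "D \<le> R"
    and t: "-R + D \<le> t"
  shows "TT b R t \<ge> - (2 * (pi * (ln (R + D) - ln (D - 1)) + 28) + 236)"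
proof -
  define t0 where "t0 = -R + D"
  define w where "w p = (if Q p \<le> 2 * R then 2 / (Q p - R + D) else 4 * R * (1 / (Q p)^2))" for p
  define Ann where "Ann = {p. R < Q p \<and> Q p \<le> 2 * R}"
  have R2: "1 \<le> 2 * R" using R by simp
  have mono: "TT b R t0 \<le> TT b R t" unfolding t0_def using R b D t by (intro TT_mono) auto
  have finAnn: "finite Ann" unfolding Ann_def by (rule finite_subset[OF _ fin_ball[of "2 * R"]]) auto
  have Out: "{p. R < Q p} = Ann \<union> {p. 2 * R < Q p}" unfolding Ann_def using R by auto
  have disj: "Ann \<inter> {p. 2 * R < Q p} = {}" unfolding Ann_def by auto
  have sw1: "w summable_on Ann" by (rule summable_on_finite[OF finAnn])
  have cw2: "w p = 4 * R * (1 / (Q p)^2)" if "p \<in> {p. 2 * R < Q p}" for p using that unfolding w_def by simp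
  have sw2: "w summable_on {p. 2 * R < Q p}"
  proof -
    have "w summable_on {p. 2 * R < Q p} \<longleftrightarrow> (\<lambda>p. 4 * R * (1 / (Q p)^2)) summable_on {p. 2 * R < Q p}"
      by (rule summable_on_cong) (rule cw2)
    then show ?thesis using sq_summ[OF R2, of "4 * R"] by simp
  qed
  have sw: "w summable_on {p. R < Q p}" unfolding Out by (rule summable_on_Un_disjoint[OF sw1 sw2 disj])
  have inf_w: "infsum w {p. R < Q p} = infsum w Ann + infsum w {p. 2 * R < Q p}"
    unfolding Out by (rule infsum_Un_disjoint[OF sw1 sw2 disj])
  have w1: "infsum w Ann \<le> 2 * (pi * (ln (R + D) - ln (D - 1)) + 28)"
  proof -
    have "infsum w Ann = sum w Ann" by (rule infsum_finite[OF finAnn])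
    also have "\<dots> = (\<Sum>p\<in>Ann. 2 * (1 / (Q p - R + D)))"
    proof (rule sum.cong[OF refl])
      fix p assume "p \<in> Ann"
      then have "Q p \<le> 2 * R" unfolding Ann_def by simp
      then show "w p = 2 * (1 / (Q p - R + D))" unfolding w_def by simp
    qed
    also have "\<dots> = 2 * (\<Sum>p\<in>Ann. 1 / (Q p - R + D))" by (simp add: sum_distrib_left)
    also have "\<dots> \<le> 2 * (pi * (ln (R + D) - ln (D - 1)) + 28)"
      using annulus[OF R D(1) D(2)] unfolding Ann_def by simp
    finally show ?thesis .
  qed
  have w2: "infsum w {p. 2 * R < Q p} \<le> 236"
  proof -
    have "infsum w {p. 2 * R < Q p} = infsum (\<lambda>p. 4 * R * (1 / (Q p)^2)) {p. 2 * R < Q p}"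
      by (rule infsum_cong[OF cw2])
    also have "\<dots> = 4 * R * infsum (\<lambda>p. 1 / (Q p)^2) {p. 2 * R < Q p}" by (rule infsum_cmult_right')
    also have "\<dots> \<le> 4 * R * (118 / (2 * R))" using tail_inf(2)[OF R2] R by (intro mult_left_mono) auto
    also have "\<dots> = 236" using R by simp
    finally show ?thesis .
  qed
  have "TT b R t0 \<ge> infsum (\<lambda>p. - w p) {p. R < Q p}"
    unfolding TT_def
  proof (rule infsum_mono)
    show "(\<lambda>p. - w p) summable_on {p. R < Q p}" using sw summable_on_uminus by blast
    show "(\<lambda>p. 1 / (Q p + b) - 1 / (Q p + t0)) summable_on {p. R < Q p}"
      using TT_summable[OF R b(1), of D t0] D unfolding t0_def by simp
    fix p assume "p \<in> {p. R < Q p}"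
    then have Qp: "R < Q p" by simp
    have Q1: "Q p > 0" using Qp R by simp
    have qt: "Q p + t0 = Q p - R + D" unfolding t0_def by simp
    have qt0: "Q p + t0 > 0" using qt Qp D by simp
    have "1 / (Q p + b) - 1 / (Q p + t0) = (t0 - b) / ((Q p + b) * (Q p + t0))"
      using Q1 b qt0 by (simp add: diff_frac_eq)
    also have "\<dots> \<ge> (- (2 * R)) / (Q p * (Q p + t0))"
    proof -
      have "- (2 * R) \<le> t0 - b" unfolding t0_def using b D by simp
      moreover have "t0 - b \<le> 0" unfolding t0_def using b D by simp
      moreover have "Q p * (Q p + t0) \<le> (Q p + b) * (Q p + t0)" using b qt0 Q1 by (intro mult_right_mono) auto
      moreover have "0 < Q p * (Q p + t0)" using Q1 qt0 by simp
      ultimately have "- (2 * R) / (Q p * (Q p + t0)) \<le> (t0 - b) / (Q p * (Q p + t0))"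
        by (intro divide_right_mono) auto
      also have "\<dots> \<le> (t0 - b) / ((Q p + b) * (Q p + t0))"
        using \<open>t0 - b \<le> 0\<close> \<open>Q p * (Q p + t0) \<le> (Q p + b) * (Q p + t0)\<close> \<open>0 < Q p * (Q p + t0)\<close>
        by (intro divide_left_mono_neg) auto
      finally show ?thesis .
    qed
    finally have low: "(- (2 * R)) / (Q p * (Q p + t0)) \<le> 1 / (Q p + b) - 1 / (Q p + t0)" .
    have "- w p \<le> (- (2 * R)) / (Q p * (Q p + t0))"
    proof (cases "Q p \<le> 2 * R")
      case True
      have "2 * R / (Q p * (Q p + t0)) \<le> 2 * R / (R * (Q p + t0))"
        using Qp R qt0 by (intro divide_left_mono mult_right_mono mult_pos_pos) auto
      also have "\<dots> = 2 / (Q p - R + D)" using R qt by simp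
      finally show ?thesis using True unfolding w_def by simp
    next
      case False
      have h: "Q p / 2 \<le> Q p + t0" using False qt D by simp
      have "2 * R / (Q p * (Q p + t0)) \<le> 2 * R / (Q p * (Q p / 2))"
        using Q1 R qt0 h by (intro divide_left_mono mult_left_mono mult_pos_pos) auto
      also have "\<dots> = 4 * R * (1 / (Q p)^2)" using Q1 by (simp add: power2_eq_square)
      finally show ?thesis using False unfolding w_def by simp
    qed
    then show "- w p \<le> 1 / (Q p + b) - 1 / (Q p + t0)" using low by linarith
  qed
  also have "infsum (\<lambda>p. - w p) {p. R < Q p} = - infsum w {p. R < Q p}" by (rule infsum_uminus)
  finally show ?thesis using mono inf_w w1 w2 by linarith
qed

lemma TT_lip:
  assumes R: "1 \<le> R" and b: "0 < b" and D: "0 < D" and t: "-R + D \<le> t" and t': "-R + D \<le> t'"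
  shows "\<bar>TT b R t - TT b R t'\<bar> \<le> (((R + D) / D)^2 * (118 / R)) * \<bar>t - t'\<bar>"
proof -
  define K where "K = ((R + D) / D)^2"
  have s1: "(\<lambda>p. 1 / (Q p + b) - 1 / (Q p + t)) summable_on {p. R < Q p}" by (rule TT_summable[OF R b D t])
  have s2: "(\<lambda>p. 1 / (Q p + b) - 1 / (Q p + t')) summable_on {p. R < Q p}" by (rule TT_summable[OF R b D t'])
  have lb: "Q p + s \<ge> Q p * D / (R + D)" if "R < Q p" "-R + D \<le> s" for p s
  proof -
    have "(Q p - R + D) * (R + D) - Q p * D = (Q p - R) * R + D * D" by (simp add: algebra_simps)
    also have "\<dots> \<ge> 0" using that R D by simp
    finally have "Q p * D \<le> (Q p - R + D) * (R + D)" by simp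
    then have "Q p * D / (R + D) \<le> Q p - R + D" using R D by (simp add: divide_le_eq)
    then show ?thesis using that by linarith
  qed
  define d where "d p = (1 / (Q p + b) - 1 / (Q p + t)) - (1 / (Q p + b) - 1 / (Q p + t'))" for p
  have s2m: "(\<lambda>p. - (1 / (Q p + b) - 1 / (Q p + t'))) summable_on {p. R < Q p}"
    by (rule summable_on_uminus[THEN iffD2, OF s2])
  have dd: "d = (\<lambda>p. (1 / (Q p + b) - 1 / (Q p + t)) + - (1 / (Q p + b) - 1 / (Q p + t')))"
    unfolding d_def by (rule ext) simp
  have sd: "d summable_on {p. R < Q p}" unfolding dd by (rule summable_on_add[OF s1 s2m])
  have TTd: "TT b R t - TT b R t' = infsum d {p. R < Q p}"
  proof -
    have "infsum d {p. R < Q p} = infsum (\<lambda>p. 1 / (Q p + b) - 1 / (Q p + t)) {p. R < Q p}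
        + infsum (\<lambda>p. - (1 / (Q p + b) - 1 / (Q p + t'))) {p. R < Q p}"
      unfolding dd by (rule infsum_add[OF s1 s2m])
    also have "infsum (\<lambda>p. - (1 / (Q p + b) - 1 / (Q p + t'))) {p. R < Q p}
        = - infsum (\<lambda>p. 1 / (Q p + b) - 1 / (Q p + t')) {p. R < Q p}" by (rule infsum_uminus)
    finally show ?thesis unfolding TT_def by simp
  qed
  have dbound: "\<bar>d p\<bar> \<le> (K * \<bar>t - t'\<bar>) * (1 / (Q p)^2)" if p: "R < Q p" for p
  proof -
    have Q1: "Q p > 0" using p R by simp
    have a1: "Q p + t \<ge> Q p * D / (R + D)" by (rule lb[OF p t])
    have a2: "Q p + t' \<ge> Q p * D / (R + D)" by (rule lb[OF p t'])
    have pos: "Q p * D / (R + D) > 0" using Q1 D R by simp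
    have "d p = (t - t') / ((Q p + t) * (Q p + t'))"
      unfolding d_def using a1 a2 pos by (simp add: diff_frac_eq algebra_simps)
    then have "\<bar>d p\<bar> = \<bar>t - t'\<bar> / ((Q p + t) * (Q p + t'))" using a1 a2 pos by (simp add: abs_div)
    also have "\<dots> \<le> \<bar>t - t'\<bar> / ((Q p * D / (R + D)) * (Q p * D / (R + D)))"
    proof (rule divide_left_mono)
      show "Q p * D / (R + D) * (Q p * D / (R + D)) \<le> (Q p + t) * (Q p + t')"
        using a1 a2 pos by (intro mult_mono) auto
      show "0 < (Q p + t) * (Q p + t') * (Q p * D / (R + D) * (Q p * D / (R + D)))"
        using a1 a2 pos by (intro mult_pos_pos) auto
    qed simp
    also have "\<dots> = (K * \<bar>t - t'\<bar>) * (1 / (Q p)^2)"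
      unfolding K_def using Q1 D R by (simp add: field_simps power2_eq_square)
    finally show ?thesis .
  qed
  have snd: "(\<lambda>p. norm (d p)) summable_on {p. R < Q p}"
    by (rule summable_on_iff_abs_summable_on_real[THEN iffD1, OF sd])
  have "\<bar>infsum d {p. R < Q p}\<bar> \<le> infsum (\<lambda>p. norm (d p)) {p. R < Q p}"
    using norm_infsum_bound[of d "{p. R < Q p}"] snd by simp
  also have "\<dots> \<le> infsum (\<lambda>p. (K * \<bar>t - t'\<bar>) * (1 / (Q p)^2)) {p. R < Q p}"
    by (rule infsum_mono[OF snd sq_summ[OF R]]) (use dbound in simp)
  also have "\<dots> = (K * \<bar>t - t'\<bar>) * infsum (\<lambda>p. 1 / (Q p)^2) {p. R < Q p}" by (rule infsum_cmult_right')
  also have "\<dots> \<le> (K * \<bar>t - t'\<bar>) * (118 / R)" using tail_inf(2)[OF R] unfolding K_def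
    by (intro mult_left_mono) auto
  finally show ?thesis unfolding TTd K_def by (simp add: algebra_simps)
qed

lemma gg_cont:
  assumes R: "1 \<le> R" and b: "0 < b" and D: "0 < D"
  shows "continuous_on {-R + D..} (gg b R)"
proof -
  have "continuous_on {-R + D..} (TT b R)"
  proof (rule lipschitz_on_continuous_on)
    show "(((R + D) / D)^2 * (118 / R))-lipschitz_on {-R + D..} (TT b R)"
    proof (rule lipschitz_onI)
      fix x y assume "x \<in> {-R + D..}" "y \<in> {-R + D..}"
      then show "dist (TT b R x) (TT b R y) \<le> ((R + D) / D)^2 * (118 / R) * dist x y"
        using TT_lip[OF R b D, of x y] by (simp add: dist_real_def)
    qed (use R in simp)
  qed
  then have c: "continuous_on {-R + D..} (\<lambda>t. (\<Sum>p\<in>{p. Q p \<le> R}. 1 / (Q p + b)) + TT b R t)"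
    by (intro continuous_on_add continuous_on_const)
  have eq: "gg b R t = (\<Sum>p\<in>{p. Q p \<le> R}. 1 / (Q p + b)) + TT b R t" if "t \<in> {-R + D..}" for t
    using gg_split[OF R b] that D by simp
  have "continuous_on {-R + D..} (gg b R) \<longleftrightarrow> continuous_on {-R + D..} (\<lambda>t. (\<Sum>p\<in>{p. Q p \<le> R}. 1 / (Q p + b)) + TT b R t)"
    by (rule continuous_on_cong[OF refl]) (rule eq)
  then show ?thesis using c by simp
qed

lemma F1_eq: "0 \<le> R \<Longrightarrow> (\<Sum>p\<in>{p. Q p \<le> R}. 1 / (Q p + b)) = (\<Sum>p\<in>{p. qf p \<le> int (nat \<lfloor>R\<rfloor>)}. 1 / (real_of_int (qf p) + b))"
  using ball_real[of R] by simp

lemma ln2_le1: "ln (2::real) \<le> 1" using ln_le_minus_one[of 2] by simp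

lemma gg_upper2:
  assumes R: "1 \<le> R" and b: "0 < b" "1 / b \<le> 64" "b \<le> R" and t: "-R < t" "t \<le> R"
  shows "gg b R t \<le> pi * ln (R / b) + 400"
proof -
  define R0 where "R0 = nat \<lfloor>R\<rfloor>"
  have R0: "real R0 \<le> R" unfolding R0_def using R by linarith
  have F1: "(\<Sum>p\<in>{p. Q p \<le> R}. 1 / (Q p + b)) \<le> 1 / b + pi * (ln (real R0 + b) - ln b) + 19 + 3 / b"
    unfolding F1_eq[of R b, OF order_trans[OF zero_le_one R]] R0_def[symmetric] by (rule F1_bounds(1)[OF b(1)])
  have l1: "ln (real R0 + b) \<le> ln 2 + ln R"
  proof -
    have "ln (real R0 + b) \<le> ln (2 * R)" using R0 b R by (subst ln_le_cancel_iff) auto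
    also have "\<dots> = ln 2 + ln R" using R by (simp add: ln_mult)
    finally show ?thesis .
  qed
  have lRb: "ln (R / b) = ln R - ln b" using R b by (simp add: ln_div)
  have "pi * (ln (real R0 + b) - ln b) \<le> pi * (ln 2 + ln (R / b))"
    using l1 lRb pi_gt_zero by (intro mult_left_mono) auto
  also have "\<dots> = pi * ln 2 + pi * ln (R / b)" by (simp add: algebra_simps)
  also have "pi * ln 2 \<le> 4" using ln2_le1 pi_less_4 pi_gt_zero ln_ge_zero[of 2]
    by (smt (verit) mult_left_le mult_nonneg_nonneg)
  finally have p: "pi * (ln (real R0 + b) - ln b) \<le> 4 + pi * ln (R / b)" by simp
  have T: "TT b R t \<le> 118" by (rule TT_upper[OF R b(1) t])
  show ?thesis using gg_split[OF R b(1) t(1)] F1 p T b(2) by linarith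
qed

lemma gg_lower2:
  assumes R: "1 \<le> R" and b: "0 < b" "1 / b \<le> 64" "b \<le> R" and D: "2 \<le> D" "sqrt R \<le> D" "D \<le> R"
    and t: "-R + D \<le> t"
  shows "gg b R t \<ge> pi * ln (R / b) - 711 - 8 * (ln R - ln D)"
proof -
  define R0 where "R0 = nat \<lfloor>R\<rfloor>"
  have R0: "R < real R0 + 1" unfolding R0_def using R by linarith
  have F1: "1 / b + pi * (ln (real R0 + 1 + b) - ln (1 + b)) - 19 - 3 / b \<le> (\<Sum>p\<in>{p. Q p \<le> R}. 1 / (Q p + b))"
    unfolding F1_eq[of R b, OF order_trans[OF zero_le_one R]] R0_def[symmetric] by (rule F1_bounds(2)[OF b(1)])
  have l1: "ln R \<le> ln (real R0 + 1 + b)" using R0 b R by (subst ln_le_cancel_iff) auto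
  have l2: "ln (1 + b) \<le> ln b + 64"
  proof -
    have e: "1 + 1 / b = (1 + b) / b" using b by (simp add: field_simps)
    have "ln (1 + b) - ln b = ln (1 + 1 / b)" unfolding e using b by (simp add: ln_div)
    also have "\<dots> \<le> 1 / b" using b by (intro ln_add_one_self_le_self) simp
    finally show ?thesis using b by linarith
  qed
  have lRb: "ln (R / b) = ln R - ln b" using R b by (simp add: ln_div)
  have "pi * (ln (R / b) - 64) \<le> pi * (ln (real R0 + 1 + b) - ln (1 + b))"
    using l1 l2 lRb pi_gt_zero by (intro mult_left_mono) auto
  moreover have "pi * (ln (R / b) - 64) = pi * ln (R / b) - 64 * pi" by (simp add: algebra_simps)
  moreover have "64 * pi \<le> 256" using pi_less_4 by simp
  moreover have "0 \<le> 1 / b" using b by simp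
  ultimately have F1': "pi * ln (R / b) - 403 \<le> (\<Sum>p\<in>{p. Q p \<le> R}. 1 / (Q p + b))"
    using F1 b(2) by linarith
  have T: "TT b R t \<ge> - (2 * (pi * (ln (R + D) - ln (D - 1)) + 28) + 236)"
    by (rule TT_lower[OF R b(1) b(3) D t])
  have d1: "ln (R + D) \<le> 1 + ln R"
  proof -
    have "ln (R + D) \<le> ln (2 * R)" using D R by (subst ln_le_cancel_iff) auto
    also have "\<dots> = ln 2 + ln R" using R by (simp add: ln_mult)
    finally show ?thesis using ln2_le1 by linarith
  qed
  have d2: "ln D - 1 \<le> ln (D - 1)"
  proof -
    have "ln (D / 2) \<le> ln (D - 1)" using D by (subst ln_le_cancel_iff) auto
    moreover have "ln (D / 2) = ln D - ln 2" using D by (simp add: ln_div)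
    ultimately show ?thesis using ln2_le1 by linarith
  qed
  have Dl: "0 \<le> ln R - ln D" using D by simp
  have "pi * (ln (R + D) - ln (D - 1)) \<le> pi * (2 + (ln R - ln D))"
    using d1 d2 pi_gt_zero by (intro mult_left_mono) auto
  also have "\<dots> \<le> 4 * (2 + (ln R - ln D))" using pi_less_4 Dl by (intro mult_right_mono) auto
  finally have A: "pi * (ln (R + D) - ln (D - 1)) \<le> 4 * (2 + (ln R - ln D))" .
  have T': "TT b R t \<ge> - (308 + 8 * (ln R - ln D))"
  proof -
    have "2 * (pi * (ln (R + D) - ln (D - 1)) + 28) + 236 \<le> 308 + 8 * (ln R - ln D)"
      using A by simp
    then show ?thesis using T by simp
  qed
  have tR: "-R < t" using t D by linarith
  show ?thesis using gg_split[OF R b(1) tR] F1' T' by linarith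
qed

lemma ln2_ge: "1 / 2 \<le> ln (2::real)"
proof -
  have "ln (1 / 2 :: real) \<le> 1 / 2 - 1" by (rule ln_le_minus_one) simp
  then show ?thesis by (simp add: ln_div)
qed

lemma ell_facts:
  assumes a: "2 * 10^7 \<le> (a::real)"
  shows "1 \<le> ln a" "2000 * ln a \<le> a"
proof -
  have "ln 4 \<le> ln a" using a by (subst ln_le_cancel_iff) auto
  moreover have "ln (4::real) = 2 * ln 2" using ln_realpow[of 2 2] by simp
  ultimately show "1 \<le> ln a" using ln2_ge by linarith
  have a0: "0 < a" using a by simp
  have s: "ln a = 2 * ln (sqrt a)" using a0 by (simp add: ln_sqrt)
  have "ln (sqrt a) \<le> sqrt a" using a0 by (intro ln_bound) simp
  then have l: "ln a \<le> 2 * sqrt a" using s by simp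
  have "4000 \<le> sqrt a"
  proof -
    have "(4000::real)^2 \<le> a" using a by simp
    then show ?thesis by (rule real_le_rsqrt)
  qed
  then have "4000 * sqrt a \<le> sqrt a * sqrt a" using a0 by (intro mult_right_mono) auto
  also have "\<dots> = a" using a0 by simp
  finally show "2000 * ln a \<le> a" using l by linarith
qed

lemma R_big:
  fixes b R :: real
  assumes b: "0 < b" "1 / b \<le> 64" and R: "0 < R" and a: "0 \<le> ln (R / b)"
  shows "((ln (R / b))^2 / 128)^2 \<le> R" "b \<le> R"
proof -
  define a where "a = ln (R / b)"
  have Rb: "R / b = exp a" unfolding a_def using R b by simp
  have Rexp: "R = b * exp a" using Rb b by (simp add: field_simps)
  have "a / 4 \<le> exp (a / 4)" using exp_ge_add_one_self[of "a/4"] by linarith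
  then have "(a / 4)^4 \<le> exp (a / 4) ^ 4" using a unfolding a_def[symmetric] by (intro power_mono) auto
  also have "exp (a / 4) ^ 4 = exp a" using exp_of_nat_mult[of 4 "a/4"] by simp
  finally have e: "(a / 4)^4 \<le> exp a" .
  have "b \<ge> 1 / 64" using b by (simp add: divide_le_eq mult.commute)
  then have "exp a / 64 \<le> R" unfolding Rexp by (simp add: mult_right_mono)
  moreover have "(a^2 / 128)^2 = (a / 4)^4 / 64" by (simp add: power2_eq_square power4_eq_xxxx)
  ultimately show "((ln (R / b))^2 / 128)^2 \<le> R" unfolding a_def[symmetric] using e by linarith
  have "1 \<le> exp a" using a unfolding a_def[symmetric] by simp
  then show "b \<le> R" unfolding Rexp using b by (simp add: mult_le_cancel_left1)
qed

lemma poly1: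
  fixes a m :: real
  assumes m: "1 \<le> m" and am: "2000 * m \<le> a"
  shows "pi * a^2 + a * m \<le> (a + 1000 * m) * (pi * a - 720 - 8 * m)"
proof -
  have a: "2000 \<le> a" using m am by linarith
  have e: "(a + 1000 * m) * (pi * a - 720 - 8 * m) = pi * a^2 - 720 * a - 8 * (a * m) + 1000 * (pi * (a * m)) - 720000 * m - 8000 * (m * m)"
    by (simp add: algebra_simps power2_eq_square)
  have f1: "a \<le> a * m" using m a by (simp add: mult_le_cancel_left1)
  have f2: "1000 * m \<le> a * m" using m a by (intro mult_right_mono) auto
  have "(1000 * m) * m \<le> (a / 2) * m" using am m by (intro mult_right_mono) auto
  then have f3: "1000 * (m * m) \<le> (a * m) / 2" by (simp add: mult.assoc)
  have f4: "3 * (a * m) \<le> pi * (a * m)" using pi_gt3 a m by (intro mult_right_mono) auto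
  show ?thesis unfolding e using f1 f2 f3 f4 a by linarith
qed

lemma poly2:
  fixes a m :: real
  assumes m: "1 \<le> m" and a: "0 \<le> a"
  shows "(a - 1000 * m) * (pi * a + 400) \<le> pi * a^2 - a * m"
proof -
  have e: "(a - 1000 * m) * (pi * a + 400) = pi * a^2 + 400 * a - 1000 * (pi * (a * m)) - 400000 * m"
    by (simp add: algebra_simps power2_eq_square)
  have f1: "a \<le> a * m" using m a by (simp add: mult_le_cancel_left1)
  have f4: "3 * (a * m) \<le> pi * (a * m)" using pi_gt3 a m by (intro mult_right_mono) auto
  show ?thesis unfolding e using f1 f4 m a by linarith
qed

definition Pd :: "real \<Rightarrow> real \<Rightarrow> real \<Rightarrow> bool" where
  "Pd b R e \<longleftrightarrow> (\<forall>p. Q p \<le> R \<longrightarrow> - Q p - e > - R \<and> gg b R (- Q p - e) \<noteq> 0) \<and>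
     - e = (\<Sum>p\<in>{p. Q p \<le> R}. inverse (gg b R (- Q p - e)))"

lemma main_scaled:
  fixes b R :: real
  assumes b: "0 < b" "1 / b \<le> 64" and R0: "0 < R" and a0: "2 * 10^7 \<le> ln (R / b)"
  shows "\<exists>em. Pd b R em \<and> (\<forall>e. Pd b R e \<longrightarrow> em \<le> e) \<and>
           \<bar>em + R / ln (R / b)\<bar> \<le> 1000 * R * ln (ln (R / b)) / (ln (R / b))^2"
proof -
  define a where "a = ln (R / b)"
  define m where "m = ln a"
  define r where "r = sqrt R"
  define X where "X = R * (a + 1000 * m) / a^2"
  define U where "U = R * (a - 1000 * m) / a^2"
  define D where "D = R / (2 * a)"
  define gL where "gL = pi * a - 720 - 8 * m"
  define gU where "gU = pi * a + 400"
  define In where "In = {p. Q p \<le> R}"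
  define N where "N = real (card In)"
  define F where "F e = - e - (\<Sum>p\<in>In. inverse (gg b R (- Q p - e)))" for e
  have a: "2 * 10^7 \<le> a" using a0 unfolding a_def .
  have a': "20000000 \<le> a" using a by simp
  have apos: "0 < a" using a by simp
  have m1: "1 \<le> m" and am: "2000 * m \<le> a" using ell_facts[OF a] unfolding m_def by auto
  have Rb1: "((a^2) / 128)^2 \<le> R" and bR: "b \<le> R"
    using R_big[OF b R0] a unfolding a_def[symmetric] by auto
  have r0: "0 \<le> r" unfolding r_def using R0 by simp
  have rr: "r * r = R" unfolding r_def using R0 by simp
  have ra: "a^2 / 128 \<le> r" unfolding r_def by (rule real_le_rsqrt[OF Rb1])
  have a2: "a * 1280 \<le> a^2" using a by (simp add: power2_eq_square)
  have r5a: "5 * a \<le> r" using ra a2 a by (simp add: field_simps)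
  have r1: "1 \<le> r" using r5a a' by linarith
  have R1: "1 \<le> R" using mult_mono[OF r1 r1] r0 rr by simp
  have r5R: "5 * r * a \<le> R" using mult_left_mono[OF r5a r0] rr by (simp add: algebra_simps)
  have rle: "5 * r \<le> R * m / a"
  proof -
    have "5 * r \<le> R / a" using r5R apos by (simp add: pos_le_divide_eq)
    also have "\<dots> \<le> R * m / a" using m1 R1 apos by (intro divide_right_mono) (auto simp: mult_le_cancel_left1)
    finally show ?thesis .
  qed
  have Dpos: "0 < D" unfolding D_def using R0 apos by simp
  have rD: "r \<le> D"
  proof -
    have "2 * a * r \<le> r * r" using r5a apos r0 by (intro mult_right_mono) auto
    then show ?thesis unfolding D_def rr using apos by (simp add: pos_le_divide_eq mult.commute)
  qed
  have D2: "2 \<le> D" using rD r5a a' by linarith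
  have DR: "D \<le> R" unfolding D_def using R0 a by (simp add: divide_le_eq)
  have sRD: "sqrt R \<le> D" using rD unfolding r_def .
  have pa: "3 * a \<le> pi * a" using pi_gt3 apos by (intro mult_right_mono) auto
  have gLpos: "0 < gL" unfolding gL_def using pa am m1 a' by linarith
  have gUpos: "0 < gU" unfolding gU_def using pa apos by linarith
  have lnRD: "ln R - ln D \<le> 1 + m"
  proof -
    have "ln D = ln R - ln (2 * a)" unfolding D_def using R0 apos by (simp add: ln_div)
    moreover have "ln (2 * a) = ln 2 + m" unfolding m_def using apos by (simp add: ln_mult)
    ultimately show ?thesis using ln2_le1 by linarith
  qed
  have glow: "gL \<le> gg b R t" if "-R + D \<le> t" for t
  proof -
    have "gg b R t \<ge> pi * ln (R / b) - 711 - 8 * (ln R - ln D)"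
      by (rule gg_lower2[OF R1 b bR D2 sRD DR that])
    moreover have "8 * (ln R - ln D) \<le> 8 + 8 * m" using lnRD by simp
    ultimately show ?thesis unfolding gL_def a_def[symmetric] by linarith
  qed
  have gup: "gg b R t \<le> gU" if "-R < t" "t \<le> R" for t
    unfolding gU_def a_def using gg_upper2[OF R1 b bR that] .
  have Ncnt: "N = real (cnt R)" unfolding N_def In_def cnt_def ..
  have Nb: "\<bar>N - pi * R\<bar> \<le> 4 * r + 1" unfolding Ncnt r_def using cnt_bound[of R] R0 by simp
  have NX: "N \<le> X * gL"
  proof -
    have p1: "pi * a^2 + a * m \<le> (a + 1000 * m) * gL" unfolding gL_def by (rule poly1[OF m1 am])
    have "X * gL = R * ((a + 1000 * m) * gL) / a^2" unfolding X_def by simp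
    also have "\<dots> \<ge> R * (pi * a^2 + a * m) / a^2" using p1 R0 by (intro divide_right_mono mult_left_mono) auto
    finally have "X * gL \<ge> R * (pi * a^2 + a * m) / a^2" .
    moreover have "R * (pi * a^2 + a * m) / a^2 = pi * R + R * m / a" using apos by (simp add: field_simps power2_eq_square)
    ultimately show ?thesis using Nb rle r1 by linarith
  qed
  have UN: "U * gU \<le> N"
  proof -
    have p2: "(a - 1000 * m) * gU \<le> pi * a^2 - a * m" unfolding gU_def by (rule poly2[OF m1]) (use apos in simp)
    have "U * gU = R * ((a - 1000 * m) * gU) / a^2" unfolding U_def by simp
    also have "\<dots> \<le> R * (pi * a^2 - a * m) / a^2" using p2 R0 by (intro divide_right_mono mult_left_mono) auto
    also have "R * (pi * a^2 - a * m) / a^2 = pi * R - R * m / a" using apos by (simp add: field_simps power2_eq_square)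
    finally show ?thesis using Nb rle r1 by linarith
  qed
  have UD: "D \<le> U"
  proof -
    have "R * (a / 2) \<le> R * (a - 1000 * m)" using am R0 by (intro mult_left_mono) auto
    then have "R * (a / 2) / a^2 \<le> U" unfolding U_def by (intro divide_right_mono) auto
    moreover have "R * (a / 2) / a^2 = D" unfolding D_def using apos by (simp add: field_simps power2_eq_square)
    ultimately show ?thesis by simp
  qed
  have XR: "X \<le> R"
  proof -
    have "a + 1000 * m \<le> a^2" using am a' a2 by linarith
    then have "R * (a + 1000 * m) \<le> R * a^2" using R0 by (intro mult_left_mono) auto
    then show ?thesis unfolding X_def using apos by (simp add: divide_le_eq)
  qed
  have UX: "U \<le> X" unfolding U_def X_def using R0 m1 by (intro divide_right_mono mult_left_mono) auto
  have Xeq: "X = R / a + 1000 * R * m / a^2" unfolding X_def using apos by (simp add: field_simps power2_eq_square)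
  have Ueq: "U = R / a - 1000 * R * m / a^2" unfolding U_def using apos by (simp add: field_simps power2_eq_square)
  have finIn: "finite In" unfolding In_def by (rule fin_ball)
  have sum_up: "(\<Sum>p\<in>In. inverse (gg b R (- Q p - e))) \<le> N / gL"
    if h: "\<And>p. p \<in> In \<Longrightarrow> gL \<le> gg b R (- Q p - e)" for e
  proof -
    have "(\<Sum>p\<in>In. inverse (gg b R (- Q p - e))) \<le> (\<Sum>p\<in>In. inverse gL)"
      using h gLpos by (intro sum_mono le_imp_inverse_le) auto
    also have "\<dots> = N / gL" unfolding N_def by (simp add: divide_inverse)
    finally show ?thesis .
  qed
  have sum_lo: "N / gU \<le> (\<Sum>p\<in>In. inverse (gg b R (- Q p - e)))"
    if h: "\<And>p. p \<in> In \<Longrightarrow> 0 < gg b R (- Q p - e) \<and> gg b R (- Q p - e) \<le> gU" for e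
  proof -
    have "N / gU = (\<Sum>p\<in>In. inverse gU)" unfolding N_def by (simp add: divide_inverse)
    also have "\<dots> \<le> (\<Sum>p\<in>In. inverse (gg b R (- Q p - e)))"
      using h by (intro sum_mono le_imp_inverse_le) auto
    finally show ?thesis .
  qed
  have Qnn: "0 \<le> Q p" for p by (rule Q_nonneg)
  have tb: "-R + D \<le> - Q p - e \<and> - Q p - e \<le> R \<and> -R < - Q p - e"
    if "e \<in> {-X..-U}" "p \<in> In" for e p
    using that UD XR Dpos Qnn[of p] unfolding In_def by auto
  have NgL: "N / gL \<le> X" using NX gLpos by (simp add: divide_le_eq)
  have NgU: "U \<le> N / gU" using UN gUpos by (simp add: le_divide_eq)
  have memX: "-X \<in> {-X..-U}" and memU: "-U \<in> {-X..-U}" using UX by auto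
  have FX: "0 \<le> F (-X)"
  proof -
    have "(\<Sum>p\<in>In. inverse (gg b R (- Q p - (-X)))) \<le> N / gL"
    proof (rule sum_up)
      fix p assume p: "p \<in> In"
      show "gL \<le> gg b R (- Q p - (-X))" using tb[OF memX p] by (intro glow) simp
    qed
    then show ?thesis unfolding F_def using NgL by simp
  qed
  have FU: "F (-U) \<le> 0"
  proof -
    have "N / gU \<le> (\<Sum>p\<in>In. inverse (gg b R (- Q p - (-U))))"
    proof (rule sum_lo)
      fix p assume p: "p \<in> In"
      have t: "-R + D \<le> - Q p - (-U) \<and> - Q p - (-U) \<le> R \<and> -R < - Q p - (-U)" by (rule tb[OF memU p])
      show "0 < gg b R (- Q p - (-U)) \<and> gg b R (- Q p - (-U)) \<le> gU"
        using glow[of "- Q p - (-U)"] gup[of "- Q p - (-U)"] t gLpos by auto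
    qed
    then show ?thesis unfolding F_def using NgU by simp
  qed
  have gpos: "0 < gg b R (- Q p - e)" if "e \<in> {-X..-U}" "p \<in> In" for e p
    using glow[of "- Q p - e"] tb[OF that] gLpos by auto
  have contF: "continuous_on {-X..-U} F"
  proof -
    have cg: "continuous_on {-X..-U} (\<lambda>e. gg b R (- Q p - e))" if p: "p \<in> In" for p
    proof (rule continuous_on_compose2[OF gg_cont[OF R1 b(1) Dpos]])
      show "continuous_on {-X..-U} (\<lambda>e. - Q p - e)" by (intro continuous_intros)
      show "(\<lambda>e. - Q p - e) ` {-X..-U} \<subseteq> {-R + D..}"
      proof
        fix y assume "y \<in> (\<lambda>e. - Q p - e) ` {-X..-U}"
        then obtain e where e: "e \<in> {-X..-U}" "y = - Q p - e" by blast
        show "y \<in> {-R + D..}" using tb[OF e(1) p] e(2) by simp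
      qed
    qed
    have "continuous_on {-X..-U} (\<lambda>e. - e - (\<Sum>p\<in>In. inverse (gg b R (- Q p - e))))"
    proof (intro continuous_on_diff continuous_on_minus continuous_on_id continuous_on_sum continuous_on_inverse)
      fix p assume "p \<in> In"
      then show "continuous_on {-X..-U} (\<lambda>e. gg b R (- Q p - e))" by (rule cg)
      show "\<forall>e\<in>{-X..-U}. gg b R (- Q p - e) \<noteq> 0" using gpos \<open>p \<in> In\<close> by (metis less_irrefl)
    qed
    then show ?thesis unfolding F_def[abs_def] .
  qed
  obtain e0 where e0: "-X \<le> e0" "e0 \<le> -U" "F e0 = 0"
    using IVT2'[of F "-U" 0 "-X", OF FU FX _ contF] UX by auto
  define Z where "Z = {e \<in> {-X..-U}. F e = 0}"
  have Zcl: "closed Z" unfolding Z_def by (rule continuous_closed_preimage_constant[OF contF closed_atLeastAtMost])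
  have "Z = {-X..-U} \<inter> Z" unfolding Z_def by auto
  then have Zc: "compact Z" using compact_Int_closed[OF compact_Icc Zcl] by metis
  have Zne: "Z \<noteq> {}" unfolding Z_def using e0 by auto
  obtain em where em: "em \<in> Z" "\<And>t. t \<in> Z \<Longrightarrow> em \<le> t" using compact_attains_inf[OF Zc Zne] by blast
  have emI: "em \<in> {-X..-U}" "F em = 0" using em(1) unfolding Z_def by auto
  have Pem: "Pd b R em"
    unfolding Pd_def
  proof (intro conjI allI impI)
    fix p assume "Q p \<le> R"
    then have p: "p \<in> In" unfolding In_def by simp
    show "- Q p - em > - R" using tb[OF emI(1) p] by simp
    show "gg b R (- Q p - em) \<noteq> 0" using gpos[OF emI(1) p] by simp
  next
    show "- em = (\<Sum>p\<in>{p. Q p \<le> R}. inverse (gg b R (- Q p - em)))"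
      using emI(2) unfolding F_def In_def by simp
  qed
  have least: "em \<le> e" if Pe: "Pd b R e" for e
  proof -
    have eq: "- e = (\<Sum>p\<in>In. inverse (gg b R (- Q p - e)))" using Pe unfolding Pd_def In_def by simp
    consider "e < -X" | "-X \<le> e \<and> e \<le> -U" | "-U < e" by linarith
    then show ?thesis
    proof cases
      case 1
      have "(\<Sum>p\<in>In. inverse (gg b R (- Q p - e))) \<le> N / gL"
      proof (rule sum_up)
        fix p assume "p \<in> In"
        then have "Q p \<le> R" unfolding In_def by simp
        then have "-R + D \<le> - Q p - e" using 1 UD UX by linarith
        then show "gL \<le> gg b R (- Q p - e)" by (rule glow)
      qed
      then show ?thesis using eq NgL 1 by linarith
    next
      case 2
      then have "e \<in> Z" unfolding Z_def F_def using eq by simp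
      then show ?thesis by (rule em(2))
    next
      case 3
      then show ?thesis using emI(1) by simp
    qed
  qed
  have bound: "\<bar>em + R / a\<bar> \<le> 1000 * R * m / a^2" using emI(1) Xeq Ueq by (simp add: abs_le_iff)
  show ?thesis using Pem least bound unfolding m_def a_def by blast
qed

lemma ksq_Q: "ksq L p = (2 * pi / L)^2 * Q p"
  unfolding ksq_def qf_def by simp

lemma Gmu_eq:
  fixes L EB \<mu> \<tau> :: real
  assumes L: "0 < L"
  defines "s \<equiv> (2 * pi / L)^2"
  shows "Gmu EB L \<mu> \<tau> = (1 / (L^2 * s)) * gg (- EB / s) (\<mu> / s) (\<tau> / s)"
proof -
  have s: "0 < s" unfolding s_def using L by simp
  have pt: "1 / (ksq L p - EB) - (if ksq L p > \<mu> then 1 / (ksq L p + \<tau>) else 0)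
        = (1 / s) * hh (- EB / s) (\<mu> / s) (\<tau> / s) p" for p
  proof -
    have k: "ksq L p = s * Q p" unfolding ksq_Q s_def ..
    have e1: "ksq L p - EB = s * (Q p + - EB / s)" unfolding k using s by (simp add: field_simps)
    have e2: "ksq L p + \<tau> = s * (Q p + \<tau> / s)" unfolding k using s by (simp add: field_simps)
    have e3: "ksq L p > \<mu> \<longleftrightarrow> Q p > \<mu> / s" unfolding k using s by (simp add: field_simps mult.commute)
    show ?thesis unfolding hh_def e1 e2 e3 by (simp add: right_diff_distrib)
  qed
  have "Gmu EB L \<mu> \<tau> = (1 / L^2) * (\<Sum>\<^sub>\<infinity>p\<in>UNIV. (1 / s) * hh (- EB / s) (\<mu> / s) (\<tau> / s) p)"
    unfolding Gmu_def pt ..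
  also have "\<dots> = (1 / L^2) * ((1 / s) * gg (- EB / s) (\<mu> / s) (\<tau> / s))"
    unfolding gg_def by (subst infsum_cmult_right') rule
  finally show ?thesis by simp
qed

lemma polaron_Pd:
  fixes L EB \<mu> e :: real
  assumes L: "0 < L"
  defines "s \<equiv> (2 * pi / L)^2"
  shows "polaron_eq EB L \<mu> e \<longleftrightarrow> Pd (- EB / s) (\<mu> / s) (e / s)"
proof -
  have s: "0 < s" unfolding s_def using L by simp
  define c where "c = 1 / (L^2 * s)"
  have c: "0 < c" unfolding c_def using s L by simp
  have G: "Gmu EB L \<mu> \<tau> = c * gg (- EB / s) (\<mu> / s) (\<tau> / s)" for \<tau>
    unfolding c_def s_def using Gmu_eq[OF L] by simp
  have k: "ksq L p = s * Q p" for p unfolding ksq_Q s_def ..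
  have arg: "(- ksq L p - e) / s = - Q p - e / s" for p unfolding k using s by (simp add: field_simps)
  have le: "ksq L p \<le> \<mu> \<longleftrightarrow> Q p \<le> \<mu> / s" for p unfolding k using s by (simp add: field_simps mult.commute)
  have gt: "- ksq L p - e > - \<mu> \<longleftrightarrow> - Q p - e / s > - (\<mu> / s)" for p
  proof -
    have x1: "s * (- Q p - e / s) = - ksq L p - e" unfolding k using s by (simp add: field_simps)
    have x2: "s * (- (\<mu> / s)) = - \<mu>" using s by simp
    have "- ksq L p - e > - \<mu> \<longleftrightarrow> s * (- Q p - e / s) > s * (- (\<mu> / s))" unfolding x1 x2 ..
    also have "\<dots> \<longleftrightarrow> - Q p - e / s > - (\<mu> / s)" by (rule mult_less_cancel_left_pos[OF s])
    finally show ?thesis .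
  qed
  have set: "{p. ksq L p \<le> \<mu>} = {p. Q p \<le> \<mu> / s}" using le by auto
  have cs: "1 / L^2 * inverse c = s" unfolding c_def using L s by (simp add: field_simps)
  have sum: "(1 / L^2) * (\<Sum>p\<in>{p. ksq L p \<le> \<mu>}. inverse (Gmu EB L \<mu> (- ksq L p - e)))
      = s * (\<Sum>p\<in>{p. Q p \<le> \<mu> / s}. inverse (gg (- EB / s) (\<mu> / s) (- Q p - e / s)))"
  proof -
    have "(\<Sum>p\<in>{p. ksq L p \<le> \<mu>}. inverse (Gmu EB L \<mu> (- ksq L p - e)))
        = (\<Sum>p\<in>{p. Q p \<le> \<mu> / s}. inverse c * inverse (gg (- EB / s) (\<mu> / s) (- Q p - e / s)))"
      unfolding set G arg by (simp add: inverse_mult_distrib)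
    also have "\<dots> = inverse c * (\<Sum>p\<in>{p. Q p \<le> \<mu> / s}. inverse (gg (- EB / s) (\<mu> / s) (- Q p - e / s)))"
      by (simp add: sum_distrib_left)
    finally show ?thesis using cs by (simp add: mult.assoc[symmetric])
  qed
  have eqn: "- e = s * S \<longleftrightarrow> - (e / s) = S" for S using s by (auto simp: field_simps)
  have A: "(\<forall>p. ksq L p \<le> \<mu> \<longrightarrow> - ksq L p - e > - \<mu> \<and> Gmu EB L \<mu> (- ksq L p - e) \<noteq> 0) \<longleftrightarrow>
      (\<forall>p. Q p \<le> \<mu> / s \<longrightarrow> - Q p - e / s > - (\<mu> / s) \<and> gg (- EB / s) (\<mu> / s) (- Q p - e / s) \<noteq> 0)"
    unfolding le gt G arg using c by simp
  have B: "(- e = (1 / L^2) * (\<Sum>p\<in>{p. ksq L p \<le> \<mu>}. inverse (Gmu EB L \<mu> (- ksq L p - e)))) \<longleftrightarrow>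
      (- (e / s) = (\<Sum>p\<in>{p. Q p \<le> \<mu> / s}. inverse (gg (- EB / s) (\<mu> / s) (- Q p - e / s))))"
    unfolding sum by (rule eqn)
  show ?thesis unfolding polaron_eq_def Pd_def A B ..
qed

theorem lemma5p3:
  fixes EB :: real
  assumes "EB < 0"
  shows "\<exists>C > 0. \<exists>\<mu>0 > 0. \<forall>L \<mu> :: real. L > 0 \<longrightarrow> \<mu> > 0 \<longrightarrow>
           L * sqrt \<bar>EB\<bar> \<ge> 1 \<longrightarrow> \<mu> / \<bar>EB\<bar> \<ge> \<mu>0 \<longrightarrow>
           \<bar>eP EB L \<mu> + \<mu> / ln (\<mu> / \<bar>EB\<bar>)\<bar>
             \<le> C * \<mu> * ln (ln (\<mu> / \<bar>EB\<bar>)) / (ln (\<mu> / \<bar>EB\<bar>))^2"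
proof -
  have main: "\<forall>L \<mu> :: real. L > 0 \<longrightarrow> \<mu> > 0 \<longrightarrow>
           L * sqrt \<bar>EB\<bar> \<ge> 1 \<longrightarrow> \<mu> / \<bar>EB\<bar> \<ge> exp (2 * 10^7) \<longrightarrow>
           \<bar>eP EB L \<mu> + \<mu> / ln (\<mu> / \<bar>EB\<bar>)\<bar>
             \<le> 1000 * \<mu> * ln (ln (\<mu> / \<bar>EB\<bar>)) / (ln (\<mu> / \<bar>EB\<bar>))^2"
  proof (intro allI impI)
  fix L \<mu> :: real
  assume L: "0 < L" and mu: "0 < \<mu>" and LE: "1 \<le> L * sqrt \<bar>EB\<bar>" and muE: "exp (2 * 10^7) \<le> \<mu> / \<bar>EB\<bar>"
  define s where "s = (2 * pi / L)^2"
  define a0 where "a0 = \<bar>EB\<bar>"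
  define b where "b = - EB / s"
  define R where "R = \<mu> / s"
  have a0: "0 < a0" "a0 = - EB" unfolding a0_def using assms by auto
  have s: "0 < s" unfolding s_def using L by simp
  have b0: "0 < b" unfolding b_def using s assms by (simp add: divide_neg_pos)
  have R0: "0 < R" unfolding R_def using s mu by simp
  have La: "1 \<le> L^2 * a0"
  proof -
    have "1 \<le> (L * sqrt a0)^2" using LE unfolding a0_def[symmetric] by (simp add: one_le_power)
    also have "\<dots> = L^2 * a0" using a0 by (simp add: power_mult_distrib)
    finally show ?thesis .
  qed
  have b64: "1 / b \<le> 64"
  proof -
    have "1 / b = 4 * pi^2 / (L^2 * a0)" unfolding b_def s_def a0(2)[symmetric] using L a0
      by (simp add: field_simps power2_eq_square)
    also have "\<dots> \<le> 4 * pi^2" using La pi_gt_zero by (simp add: divide_le_eq mult_le_cancel_left1)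
    also have "\<dots> \<le> 4 * 4^2" using pi_less_4 pi_gt_zero by (intro mult_left_mono power_mono) auto
    finally show ?thesis by simp
  qed
  have Rb: "R / b = \<mu> / \<bar>EB\<bar>" unfolding R_def b_def using s assms by (simp add: field_simps)
  have ell: "2 * 10^7 \<le> ln (R / b)"
    unfolding Rb using muE mu assms by (subst ln_ge_iff) (auto simp: divide_pos_neg)
  obtain em where em: "Pd b R em" "\<And>e. Pd b R e \<Longrightarrow> em \<le> e"
    and bd: "\<bar>em + R / ln (R / b)\<bar> \<le> 1000 * R * ln (ln (R / b)) / (ln (R / b))^2"
    using main_scaled[OF b0 b64 R0 ell] by blast
  have P: "polaron_eq EB L \<mu> e \<longleftrightarrow> Pd b R (e / s)" for e
    unfolding b_def R_def s_def using polaron_Pd[OF L] by simp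
  have eP: "eP EB L \<mu> = s * em"
    unfolding eP_def
  proof (rule Least_equality)
    show "polaron_eq EB L \<mu> (s * em)" unfolding P using em(1) s by simp
    fix y assume "polaron_eq EB L \<mu> y"
    then have "em \<le> y / s" using em(2) unfolding P by blast
    then show "s * em \<le> y" using s by (simp add: pos_le_divide_eq mult.commute)
  qed
  have mu_eq: "\<mu> = s * R" unfolding R_def using s by simp
  have ee: "eP EB L \<mu> + \<mu> / ln (\<mu> / \<bar>EB\<bar>) = s * (em + R / ln (R / b))"
    unfolding eP Rb[symmetric] by (simp add: mu_eq distrib_left)
  have "\<bar>eP EB L \<mu> + \<mu> / ln (\<mu> / \<bar>EB\<bar>)\<bar> = s * \<bar>em + R / ln (R / b)\<bar>"
    unfolding ee using s by (simp add: abs_mult)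
  also have "\<dots> \<le> s * (1000 * R * ln (ln (R / b)) / (ln (R / b))^2)" using bd s by (intro mult_left_mono) auto
  also have "\<dots> = 1000 * (s * R) * ln (ln (R / b)) / (ln (R / b))^2" by (simp add: algebra_simps)
  also have "\<dots> = 1000 * \<mu> * ln (ln (\<mu> / \<bar>EB\<bar>)) / (ln (\<mu> / \<bar>EB\<bar>))^2"
    unfolding Rb mu_eq[symmetric] ..
  finally show "\<bar>eP EB L \<mu> + \<mu> / ln (\<mu> / \<bar>EB\<bar>)\<bar> \<le> 1000 * \<mu> * ln (ln (\<mu> / \<bar>EB\<bar>)) / (ln (\<mu> / \<bar>EB\<bar>))^2" .
  qed
  have c0: "(0::real) < 1000" by simp
  have m0: "(0::real) < exp (2 * 10^7)" by simp
  show ?thesis using main c0 m0 by blast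
qed

end
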